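(* For every prime $d$, every $n\ge 1$ and every $n$-qudit state $\rho$, the mean state $\mathcal M(\rho)$ is a minimal stabilizer-projection state (MSPS). More precisely, the set $S=\{\vec x\in V^n:|\Xi_\rho(\vec x)|=1\}$ is a subgroup of $V^n$ of size $d^r$ for some $0\le r\le n$ whose Weyl operators pairwise commute, and $\mathcal M(\rho)=P/d^{n-r}$ where $P$ is a minimal projection in the C*-algebra generated by $\{w(\vec x):\vec x\in S\}$.
   Context: Fix a prime $d$ and $n\ge1$. Let $\mathcal H=\mathbb C^d$ with computational basis $\{|k\rangle\}_{k\in\mathbb Z_d}$, $\chi(k)=e^{2\pi i k/d}$, $X|k\rangle=|k+1\rangle$, $Z|k\rangle=\chi(k)|k\rangle$. For $(p,q)\in\mathbb Z_d^2$ the Weyl operator is $w(p,q)=\chi(-2^{-1}pq)Z^pX^q$ if $d$ is odd ($2^{-1}$ the inverse of $2$ mod $d$) and $w(p,q)=i^{-pq}Z^pX^q$ if $d=2$. Let $V^n=\mathbb Z_d^n\times\mathbb Z_d^n$; for $(\vec p,\vec q)\in V^n$ set $w(\vec p,\vec q)=\bigotimes_{k=1}^n w(p_k,q_k)$ on $\mathcal H^{\otimes n}$. A state is a positive semidefinite trace-one operator. The characteristic function of $\rho$ is $\Xi_\rho(\vec p,\vec q)=\mathrm{Tr}[\rho\,w(-\vec p,-\vec q)]$, so that $\rho=d^{-n}\sum_{(\vec p,\vec q)\in V^n}\Xi_\rho(\vec p,\vec q)w(\vec p,\vec q)$. For an abelian group $S$ of Weyl operators (considered up to phases), a minimal projection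 of the C*-algebra $C^*(S)$ generated by $S$ is a minimal stabilizer projection associated with $S$, and a minimal stabilizer-projection state (MSPS) is such a projection divided by its rank. The mean state $\mathcal M(\rho)$ is the operator with characteristic function $\Xi_{\mathcal M(\rho)}(\vec x)=\Xi_\rho(\vec x)$ if $|\Xi_\rho(\vec x)|=1$ and $\Xi_{\mathcal M(\rho)}(\vec x)=0$ otherwise. *)

theory Defs
  imports Complex_Main "HOL-Computational_Algebra.Primes"
begin

text \<open>Operators on the n-qudit space (C^d)^{tensor n} are represented by their matrix
  kernels indexed by computational basis vectors, i.e. lists of length n with
  entries in {0..<d}.\<close>

type_synonym qop = "nat list \<Rightarrow> nat list \<Rightarrow> complex"

definition qbasis :: "nat \<Rightarrow> nat \<Rightarrow> nat list set" where
  "qbasis d n = {xs. length xs = n \<and> set xs \<subseteq> {..<d}}"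

definition is_op :: "nat \<Rightarrow> nat \<Rightarrow> qop \<Rightarrow> bool" where
  "is_op d n A \<longleftrightarrow> (\<forall>x y. (x \<notin> qbasis d n \<or> y \<notin> qbasis d n) \<longrightarrow> A x y = 0)"

definition op_mult :: "nat \<Rightarrow> nat \<Rightarrow> qop \<Rightarrow> qop \<Rightarrow> qop" where
  "op_mult d n A B = (\<lambda>x y. if x \<in> qbasis d n \<and> y \<in> qbasis d n
      then (\<Sum>z\<in>qbasis d n. A x z * B z y) else 0)"

definition op_add :: "qop \<Rightarrow> qop \<Rightarrow> qop" where
  "op_add A B = (\<lambda>x y. A x y + B x y)"

definition op_smult :: "complex \<Rightarrow> qop \<Rightarrow> qop" where
  "op_smult c A = (\<lambda>x y. c * A x y)"

definition op_adj :: "qop \<Rightarrow> qop" where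
  "op_adj A = (\<lambda>x y. cnj (A y x))"

definition op_trace :: "nat \<Rightarrow> nat \<Rightarrow> qop \<Rightarrow> complex" where
  "op_trace d n A = (\<Sum>x\<in>qbasis d n. A x x)"

definition is_state :: "nat \<Rightarrow> nat \<Rightarrow> qop \<Rightarrow> bool" where
  "is_state d n \<rho> \<longleftrightarrow> is_op d n \<rho> \<and> op_adj \<rho> = \<rho> \<and>
     (\<forall>v :: nat list \<Rightarrow> complex.
        0 \<le> Re (\<Sum>x\<in>qbasis d n. \<Sum>y\<in>qbasis d n. cnj (v x) * \<rho> x y * v y)) \<and>
     op_trace d n \<rho> = 1"

definition chi :: "nat \<Rightarrow> int \<Rightarrow> complex" where
  "chi d k = exp (2 * complex_of_real pi * \<i> * of_int k / of_nat d)"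

text \<open>Phase of the Weyl operator w(p,q), p q in {0..<d}: chi(-2^{-1} p q) for odd d
  (2^{-1} = (d+1)/2 mod d), and i^{-pq} for d = 2.\<close>
definition wphase :: "nat \<Rightarrow> nat \<Rightarrow> nat \<Rightarrow> complex" where
  "wphase d p q = (if d = 2 then inverse (\<i> ^ (p * q))
                   else chi d (- int ((d + 1) div 2) * int p * int q))"

text \<open>Matrix entry <j| w(p,q) |k> where w(p,q) = phase * Z^p X^q,
  X|k> = |k+1>, Z|k> = chi(k)|k>; so Z^p X^q |k> = chi(p (k+q)) |k+q>.\<close>
definition weyl1 :: "nat \<Rightarrow> nat \<Rightarrow> nat \<Rightarrow> nat \<Rightarrow> nat \<Rightarrow> complex" where
  "weyl1 d p q j k = wphase d p q * (if j = (k + q) mod d then chi d (int (p * j)) else 0)"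

definition Vn :: "nat \<Rightarrow> nat \<Rightarrow> (nat list \<times> nat list) set" where
  "Vn d n = qbasis d n \<times> qbasis d n"

definition vadd :: "nat \<Rightarrow> nat list \<times> nat list \<Rightarrow> nat list \<times> nat list \<Rightarrow> nat list \<times> nat list" where
  "vadd d u v = (map2 (\<lambda>a b. (a + b) mod d) (fst u) (fst v),
                 map2 (\<lambda>a b. (a + b) mod d) (snd u) (snd v))"

definition vneg :: "nat \<Rightarrow> nat list \<times> nat list \<Rightarrow> nat list \<times> nat list" where
  "vneg d u = (map (\<lambda>a. (d - a) mod d) (fst u), map (\<lambda>a. (d - a) mod d) (snd u))"

definition vzero :: "nat \<Rightarrow> nat list \<times> nat list" where
  "vzero n = (replicate n 0, replicate n 0)"

definition weyl :: "nat \<Rightarrow> nat \<Rightarrow> nat list \<times> nat list \<Rightarrow> qop" where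
  "weyl d n v = (\<lambda>xs ys. if xs \<in> qbasis d n \<and> ys \<in> qbasis d n
      then (\<Prod>k<n. weyl1 d (fst v ! k) (snd v ! k) (xs ! k) (ys ! k)) else 0)"

definition charfun :: "nat \<Rightarrow> nat \<Rightarrow> qop \<Rightarrow> nat list \<times> nat list \<Rightarrow> complex" where
  "charfun d n \<rho> v = op_trace d n (op_mult d n \<rho> (weyl d n (vneg d v)))"

text \<open>Mean state: the operator whose characteristic function equals Xi_rho where
  |Xi_rho| = 1 and 0 elsewhere, written via the inversion formula
  rho = d^{-n} sum_x Xi_rho(x) w(x).\<close>
definition mean_state :: "nat \<Rightarrow> nat \<Rightarrow> qop \<Rightarrow> qop" where
  "mean_state d n \<rho> = (\<lambda>xs ys. (1 / of_nat d ^ n) *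
      (\<Sum>v\<in>{v \<in> Vn d n. cmod (charfun d n \<rho> v) = 1}. charfun d n \<rho> v * weyl d n v xs ys))"

text \<open>C*-algebra generated by a set of operators (finite dimension: the *-algebra
  generated; norm closure is automatic).\<close>
inductive_set cstar_gen :: "nat \<Rightarrow> nat \<Rightarrow> qop set \<Rightarrow> qop set" for d n G where
  gen: "A \<in> G \<Longrightarrow> A \<in> cstar_gen d n G"
| add: "A \<in> cstar_gen d n G \<Longrightarrow> B \<in> cstar_gen d n G \<Longrightarrow> op_add A B \<in> cstar_gen d n G"
| smult: "A \<in> cstar_gen d n G \<Longrightarrow> op_smult c A \<in> cstar_gen d n G"
| mult: "A \<in> cstar_gen d n G \<Longrightarrow> B \<in> cstar_gen d n G \<Longrightarrow> op_mult d n A B \<in> cstar_gen d n G"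
| adj: "A \<in> cstar_gen d n G \<Longrightarrow> op_adj A \<in> cstar_gen d n G"

definition is_projection :: "nat \<Rightarrow> nat \<Rightarrow> qop \<Rightarrow> bool" where
  "is_projection d n P \<longleftrightarrow> is_op d n P \<and> op_adj P = P \<and> op_mult d n P P = P"

definition minimal_projection :: "nat \<Rightarrow> nat \<Rightarrow> qop set \<Rightarrow> qop \<Rightarrow> bool" where
  "minimal_projection d n Alg P \<longleftrightarrow> P \<in> Alg \<and> is_projection d n P \<and> P \<noteq> (\<lambda>x y. 0) \<and>
     (\<forall>Q\<in>Alg. is_projection d n Q \<and> op_mult d n P Q = Q \<longrightarrow> Q = (\<lambda>x y. 0) \<or> Q = P)"

end

theory Submission
  imports Defs "HOL-Algebra.Coset"
begin

lemma qbasis_alt: "qbasis d n = {xs. set xs \<subseteq> {..<d} \<and> length xs = n}"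
  unfolding qbasis_def by auto

lemma finite_qbasis[simp]: "finite (qbasis d n)"
  unfolding qbasis_alt by (rule finite_lists_length_eq) simp

lemma card_qbasis: "card (qbasis d n) = d ^ n"
  unfolding qbasis_alt using card_lists_length_eq[of "{..<d}" n] by simp

lemma mem_qbasis: "xs \<in> qbasis d n \<longleftrightarrow> length xs = n \<and> (\<forall>k<n. xs ! k < d)"
  unfolding qbasis_def by (auto simp: in_set_conv_nth subset_iff)

lemma finite_Vn[simp]: "finite (Vn d n)" unfolding Vn_def by simp

lemma card_Vn: "card (Vn d n) = d ^ (2*n)"
  unfolding Vn_def by (simp add: card_cartesian_product card_qbasis power_mult_distrib power2_eq_square power_mult)

lemma nth_map2: "k < length xs \<Longrightarrow> k < length ys \<Longrightarrow> map2 f xs ys ! k = f (xs!k) (ys!k)"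
  by simp

lemma map2_qb: "0 < d \<Longrightarrow> xs \<in> qbasis d n \<Longrightarrow> ys \<in> qbasis d n \<Longrightarrow> map2 (\<lambda>a b. (a + b) mod d) xs ys \<in> qbasis d n"
  by (simp add: mem_qbasis)

lemma mapneg_qb: "0 < d \<Longrightarrow> xs \<in> qbasis d n \<Longrightarrow> map (\<lambda>a. (d - a) mod d) xs \<in> qbasis d n"
  by (simp add: mem_qbasis)

lemma vadd_Vn: "0 < d \<Longrightarrow> u \<in> Vn d n \<Longrightarrow> v \<in> Vn d n \<Longrightarrow> vadd d u v \<in> Vn d n"
  unfolding Vn_def vadd_def by (auto intro: map2_qb)

lemma vneg_Vn: "0 < d \<Longrightarrow> u \<in> Vn d n \<Longrightarrow> vneg d u \<in> Vn d n"
  unfolding Vn_def vneg_def by (auto intro: mapneg_qb)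

lemma vzero_Vn: "0 < d \<Longrightarrow> vzero n \<in> Vn d n"
  unfolding Vn_def vzero_def by (simp add: mem_qbasis)

lemma Vn_eq: "u \<in> Vn d n \<longleftrightarrow> length (fst u) = n \<and> length (snd u) = n \<and>
   (\<forall>k<n. fst u ! k < d) \<and> (\<forall>k<n. snd u ! k < d)"
  unfolding Vn_def by (cases u) (auto simp: mem_qbasis)

lemma fst_vadd_nth: "u \<in> Vn d n \<Longrightarrow> v \<in> Vn d n \<Longrightarrow> k < n \<Longrightarrow> fst (vadd d u v) ! k = (fst u ! k + fst v ! k) mod d"
  by (simp add: vadd_def Vn_eq)
lemma snd_vadd_nth: "u \<in> Vn d n \<Longrightarrow> v \<in> Vn d n \<Longrightarrow> k < n \<Longrightarrow> snd (vadd d u v) ! k = (snd u ! k + snd v ! k) mod d"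
  by (simp add: vadd_def Vn_eq)
lemma fst_vneg_nth: "u \<in> Vn d n \<Longrightarrow> k < n \<Longrightarrow> fst (vneg d u) ! k = (d - fst u ! k) mod d"
  by (simp add: vneg_def Vn_eq)
lemma snd_vneg_nth: "u \<in> Vn d n \<Longrightarrow> k < n \<Longrightarrow> snd (vneg d u) ! k = (d - snd u ! k) mod d"
  by (simp add: vneg_def Vn_eq)

lemma Vn_ext: "u \<in> Vn d n \<Longrightarrow> v \<in> Vn d n \<Longrightarrow> (\<And>k. k < n \<Longrightarrow> fst u ! k = fst v ! k \<and> snd u ! k = snd v ! k) \<Longrightarrow> u = v"
  by (metis Vn_eq nth_equalityI prod_eqI)

lemma vadd_comm: "u \<in> Vn d n \<Longrightarrow> v \<in> Vn d n \<Longrightarrow> vadd d u v = vadd d v u"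
  by (rule Vn_ext[of _ d n]) (auto simp: fst_vadd_nth snd_vadd_nth add.commute intro: vadd_Vn Vn_eq[THEN iffD2] simp: Vn_eq vadd_def)

lemma vadd_assoc: "0 < d \<Longrightarrow> u \<in> Vn d n \<Longrightarrow> v \<in> Vn d n \<Longrightarrow> w \<in> Vn d n \<Longrightarrow>
   vadd d (vadd d u v) w = vadd d u (vadd d v w)"
proof -
  assume a: "0 < d" "u \<in> Vn d n" "v \<in> Vn d n" "w \<in> Vn d n"
  have m: "vadd d u v \<in> Vn d n" "vadd d v w \<in> Vn d n" using a vadd_Vn by auto
  show ?thesis
    apply (rule Vn_ext[of _ d n])
    using a m apply (simp_all add: vadd_Vn fst_vadd_nth[where n=n] snd_vadd_nth[where n=n])
    by (simp add: mod_add_left_eq mod_add_right_eq add.assoc)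
qed

lemma fst_vzero_nth: "k < n \<Longrightarrow> fst (vzero n) ! k = 0" by (simp add: vzero_def)
lemma snd_vzero_nth: "k < n \<Longrightarrow> snd (vzero n) ! k = 0" by (simp add: vzero_def)

lemma Vn_lt: "u \<in> Vn d n \<Longrightarrow> k < n \<Longrightarrow> fst u ! k < d \<and> snd u ! k < d"
  by (simp add: Vn_eq)

lemma vadd_zero: "0 < d \<Longrightarrow> u \<in> Vn d n \<Longrightarrow> vadd d (vzero n) u = u"
  apply (rule Vn_ext[of _ d n])
  by (auto intro!: vadd_Vn vzero_Vn simp: fst_vadd_nth[where n=n] snd_vadd_nth[where n=n] vzero_Vn fst_vzero_nth snd_vzero_nth Vn_lt)

lemma negmod_add: "(a::nat) < d \<Longrightarrow> ((d - a) mod d + a) mod d = 0"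
  by (cases "a = 0") auto

lemma negneg: "(a::nat) < d \<Longrightarrow> (d - (d - a) mod d) mod d = a"
  by (cases "a = 0") auto

lemma vadd_neg: "0 < d \<Longrightarrow> u \<in> Vn d n \<Longrightarrow> vadd d (vneg d u) u = vzero n"
  apply (rule Vn_ext[of _ d n])
  by (auto intro!: vadd_Vn vneg_Vn vzero_Vn simp: fst_vadd_nth[where n=n] snd_vadd_nth[where n=n] fst_vneg_nth[where n=n] snd_vneg_nth[where n=n] vneg_Vn fst_vzero_nth snd_vzero_nth negmod_add Vn_lt)

lemma vneg_vneg: "0 < d \<Longrightarrow> u \<in> Vn d n \<Longrightarrow> vneg d (vneg d u) = u"
  apply (rule Vn_ext[of _ d n])
  by (auto intro!: vneg_Vn simp: fst_vneg_nth[where n=n] snd_vneg_nth[where n=n] vneg_Vn negneg Vn_lt)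

lemma vneg_zero: "0 < d \<Longrightarrow> vneg d (vzero n) = vzero n"
  by (simp add: vneg_def vzero_def)

lemma vzero_eq_iff: "0 < d \<Longrightarrow> u \<in> Vn d n \<Longrightarrow> u = vzero n \<longleftrightarrow> (\<forall>k<n. fst u ! k = 0 \<and> snd u ! k = 0)"
  using Vn_ext[of u d n "vzero n"] vzero_Vn[of d n]
  by (auto simp: fst_vzero_nth snd_vzero_nth)

definition VG :: "nat \<Rightarrow> nat \<Rightarrow> (nat list \<times> nat list) monoid" where
  "VG d n = \<lparr>carrier = Vn d n, mult = vadd d, one = vzero n\<rparr>"

lemma group_VG: "0 < d \<Longrightarrow> group (VG d n)"
  apply (rule groupI)
  apply (auto simp: VG_def vadd_Vn vzero_Vn vadd_assoc vadd_zero)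
  using vadd_neg vneg_Vn by blast

lemma card_subgroup_dvd:
  assumes d: "0 < d" and S: "S \<subseteq> Vn d n" "vzero n \<in> S" "\<forall>u\<in>S. \<forall>v\<in>S. vadd d u v \<in> S" "\<forall>u\<in>S. vneg d u \<in> S"
  shows "card S dvd d ^ (2*n)"
proof -
  interpret group "VG d n" using group_VG[OF d] .
  have inv: "u \<in> S \<Longrightarrow> inv\<^bsub>VG d n\<^esub> u = vneg d u" for u
    apply (rule inv_equality)
    using S d by (auto simp: VG_def vadd_neg vneg_Vn)
  have "subgroup S (VG d n)"
    apply (rule subgroupI)
    using S inv by (auto simp: VG_def)
  from lagrange[OF this] have "card (rcosets\<^bsub>VG d n\<^esub> S) * card S = d ^ (2*n)"
    by (simp add: order_def VG_def card_Vn)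
  then show ?thesis by (metis dvd_triv_right)
qed

lemma chi_cis: "chi d k = cis (2 * pi * of_int k / of_nat d)"
  unfolding chi_def cis_conv_exp by (simp add: mult.commute mult.left_commute)

lemma chi_add: "chi d (a + b) = chi d a * chi d b"
  unfolding chi_cis cis_mult by (simp add: ring_distribs add_divide_distrib)

lemma chi_zero[simp]: "chi d 0 = 1" by (simp add: chi_cis)

lemma cmod_chi[simp]: "cmod (chi d k) = 1" by (simp add: chi_cis)

lemma cnj_chi: "cnj (chi d k) = chi d (- k)"
  by (simp add: chi_cis cis_cnj)

lemma chi_mult_d: "0 < d \<Longrightarrow> chi d (int d * m) = 1"
proof -
  assume "0 < d"
  then have "2 * pi * of_int (int d * m) / of_nat d = 2 * pi * real_of_int m" by simp
  then show ?thesis unfolding chi_cis by simp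
qed

lemma chi_period: "0 < d \<Longrightarrow> chi d (a + int d * m) = chi d a"
  by (simp add: chi_add chi_mult_d)

lemma chi_dvd: "0 < d \<Longrightarrow> int d dvd (a - b) \<Longrightarrow> chi d a = chi d b"
  by (metis chi_period dvdE diff_add_cancel add.commute)

lemma chi_mod: "0 < d \<Longrightarrow> chi d (a mod int d) = chi d a"
  by (rule chi_dvd) (auto, metis mod_eq_dvd_iff mod_mod_trivial)

lemma chi_neg_inv: "chi d (- k) * chi d k = 1"
  by (metis add.left_inverse chi_add chi_zero)

lemma chi_eq_1: "0 < d \<Longrightarrow> chi d k = 1 \<Longrightarrow> int d dvd k"
proof -
  assume d: "0 < d" and c: "chi d k = 1"
  then have "cos (2 * pi * of_int k / of_nat d) = 1" unfolding chi_cis by (simp add: complex_eq_iff)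
  then obtain m :: int where "2 * pi * of_int k / of_nat d = of_int m * 2 * pi"
    by (subst (asm) cos_one_2pi_int) blast
  then have "real_of_int k = real_of_int (m * int d)" using d by (simp add: field_simps)
  then have "k = m * int d" by linarith
  then show ?thesis by simp
qed

lemma chi_pow: "chi d (int j * a) = chi d a ^ j"
  by (induction j) (auto simp: ring_distribs chi_add)

lemma sum_chi: "0 < d \<Longrightarrow> \<not> int d dvd a \<Longrightarrow> (\<Sum>j<d. chi d (int j * a)) = 0"
proof -
  assume d: "0 < d" and nd: "\<not> int d dvd a"
  let ?z = "chi d a"
  have z1: "?z \<noteq> 1" using chi_eq_1 d nd by blast
  have zd: "?z ^ d = 1" using chi_pow[of d d a] chi_mult_d[OF d, of a] by simp
  have "(\<Sum>j<d. chi d (int j * a)) = (\<Sum>j<d. ?z ^ j)" by (simp add: chi_pow)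
  also have "\<dots> = (?z ^ d - 1) / (?z - 1)" using z1 by (simp add: geometric_sum)
  also have "\<dots> = 0" using zd by simp
  finally show ?thesis .
qed

lemma chi_mod_mult: "0 < d \<Longrightarrow> chi d (c * (x mod int d)) = chi d (c * x)"
  apply (rule chi_dvd, simp)
  by (metis dvd_mult mod_eq_dvd_iff mod_mod_trivial right_diff_distrib)

lemma chi_mod_mult': "0 < d \<Longrightarrow> chi d ((x mod int d) * c) = chi d (x * c)"
  using chi_mod_mult by (metis mult.commute)

lemma int_mod: "int (a mod d) = int a mod int d" by (simp add: of_nat_mod)

lemma wphase_nz: "wphase d p q \<noteq> 0"
  unfolding wphase_def by (auto simp: chi_cis)

lemma cmod_wphase: "cmod (wphase d p q) = 1"
  unfolding wphase_def by (auto simp: norm_power norm_inverse)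

definition c1 :: "nat \<Rightarrow> nat \<Rightarrow> nat \<Rightarrow> nat \<Rightarrow> nat \<Rightarrow> complex" where
  "c1 d a b a' b' = wphase d a b * wphase d a' b' * chi d (- (int a' * int b)) / wphase d ((a+a') mod d) ((b+b') mod d)"

lemma cmod_c1: "cmod (c1 d a b a' b') = 1"
  unfolding c1_def by (simp add: norm_mult norm_divide cmod_wphase)

lemma w1_mult:
  assumes d: "0 < d" and jk: "j < d" "k < d"
  shows "(\<Sum>m<d. weyl1 d a b j m * weyl1 d a' b' m k) = c1 d a b a' b' * weyl1 d ((a+a') mod d) ((b+b') mod d) j k"
proof -
  define m0 where "m0 = (k + b') mod d"
  have m0: "m0 < d" using d by (simp add: m0_def)
  have "\<And>m. weyl1 d a b j m * weyl1 d a' b' m k = (if m = m0 then wphase d a b * wphase d a' b' *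
      (if j = (m0 + b) mod d then chi d (int (a*j)) * chi d (int (a'*m0)) else 0) else 0)"
    by (simp add: weyl1_def m0_def)
  then have "(\<Sum>m<d. weyl1 d a b j m * weyl1 d a' b' m k) = wphase d a b * wphase d a' b' *
      (if j = (m0 + b) mod d then chi d (int (a*j)) * chi d (int (a'*m0)) else 0)"
    using m0 by (simp add: sum.delta)
  also have "\<dots> = c1 d a b a' b' * weyl1 d ((a+a') mod d) ((b+b') mod d) j k"
  proof (cases "j = (m0 + b) mod d")
    case True
    have eqc: "j = (k + (b + b') mod d) mod d" using True by (simp add: m0_def mod_simps add_ac)
    have J: "int j = (int k + int b + int b') mod int d" using True
      by (simp add: m0_def int_mod mod_simps add_ac)
    have M: "int m0 = (int k + int b') mod int d" by (simp add: m0_def int_mod)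
    have "chi d (int (a*j)) * chi d (int (a'*m0)) = chi d (int a * (int k + int b + int b')) * chi d (int a' * (int k + int b'))"
      by (simp only: of_nat_mult J M chi_mod_mult[OF d])
    also have "\<dots> = chi d (- (int a' * int b)) * chi d ((int a + int a') * (int k + int b + int b'))"
      unfolding chi_add[symmetric] by (simp add: algebra_simps)
    also have "\<dots> = chi d (- (int a' * int b)) * chi d (int ((a + a') mod d * j))"
      by (simp only: of_nat_mult int_mod J chi_mod_mult[OF d] chi_mod_mult'[OF d] of_nat_add)
    finally show ?thesis using True eqc wphase_nz[of d "(a+a') mod d" "(b+b') mod d"]
      by (simp add: weyl1_def c1_def)
  next
    case False
    have "j \<noteq> (k + (b + b') mod d) mod d" using False by (simp add: m0_def mod_simps add_ac)
    then show ?thesis using False by (simp add: weyl1_def)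
  qed
  finally show ?thesis .
qed

lemma chi_modeq: "0 < d \<Longrightarrow> x mod int d = y mod int d \<Longrightarrow> chi d x = chi d y"
  by (metis chi_mod)

lemma int_negmod: "a \<le> d \<Longrightarrow> int ((d - a) mod d) = (- int a) mod int d"
  by (simp add: int_mod of_nat_diff mod_simps)

lemma cond_swap: "0 < (d::nat) \<Longrightarrow> j < d \<Longrightarrow> k < d \<Longrightarrow> b < d \<Longrightarrow>
  (k = (j + b) mod d) \<longleftrightarrow> (j = (k + (d - b) mod d) mod d)"
proof
  assume d: "0 < d" "j < d" "k < d" "b < d"
  { assume k: "k = (j + b) mod d"
    have "(k + (d - b) mod d) mod d = (j + b + (d - b)) mod d" unfolding k by (rule mod_add_eq)
    also have "\<dots> = j" using d by simp
    finally show "j = (k + (d - b) mod d) mod d" by simp }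
  { assume j: "j = (k + (d - b) mod d) mod d"
    have "(j + b) mod d = (k + (d - b) mod d + b) mod d" unfolding j by (rule mod_add_left_eq)
    also have "\<dots> = ((k + b) + (d - b) mod d) mod d" by (simp only: ac_simps)
    also have "\<dots> = ((k + b) + (d - b)) mod d" by (rule mod_add_right_eq)
    also have "\<dots> = (k + (d - b) + b) mod d" by (simp only: ac_simps)
    also have "\<dots> = k" using d by simp
    finally show "k = (j + b) mod d" by simp }
qed

lemma mod3: "((X::int) * (y mod m) * (z mod m)) mod m = (X * y * z) mod m"
proof -
  have "(X * (y mod m) * (z mod m)) mod m = (X * (y mod m) * z) mod m" by (rule mod_mult_right_eq)
  also have "\<dots> = ((y mod m) * (X * z)) mod m" by (simp only: ac_simps)
  also have "\<dots> = (y * (X * z)) mod m" by (rule mod_mult_left_eq)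
  also have "\<dots> = (X * y * z) mod m" by (simp only: ac_simps)
  finally show ?thesis .
qed

lemma prime_cases: "prime (d::nat) \<Longrightarrow> d = 2 \<or> (odd d \<and> 2 < d)"
  proof -
  assume p: "prime d"
  show ?thesis
  proof (cases "d = 2")
    case False
    then have "2 < d" using prime_ge_2_nat[OF p] by linarith
    then show ?thesis using prime_odd_nat[OF p] by simp
  qed simp
qed

lemma phase_adj:
  assumes p: "prime d" and ab: "a < d" "b < d"
  shows "cnj (wphase d a b) * chi d (- (int a * int b)) = wphase d ((d - a) mod d) ((d - b) mod d)"
proof (cases "d = 2")
  case True
  have m1: "chi 2 (-1) = -1" by (simp add: chi_cis complex_eq_iff)
  have "a = 0 \<or> a = 1" "b = 0 \<or> b = 1" using ab True by auto
  then show ?thesis using True m1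
    by (auto simp: wphase_def)
next
  case False
  then have od: "odd d" and d2: "2 < d" using prime_cases[OF p] by auto
  define h where "h = (d + 1) div 2"
  have h2: "2 * int h = int d + 1" using od by (auto simp: h_def elim!: oddE)
  have d0: "0 < d" using d2 by simp
  have "cnj (wphase d a b) * chi d (- (int a * int b)) = chi d (int h * int a * int b - int a * int b)"
    using False by (simp add: wphase_def h_def cnj_chi chi_add[symmetric])
  also have "\<dots> = chi d (- int h * int a * int b)"
  proof (rule chi_dvd[OF d0])
    have "int h * int a * int b - int a * int b - (- int h * int a * int b) = (2 * int h - 1) * (int a * int b)"
      by (simp add: algebra_simps)
    also have "\<dots> = int d * (int a * int b)" using h2 by simp
    finally show "int d dvd int h * int a * int b - int a * int b - (- int h * int a * int b)" by simp
  qed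
  also have "\<dots> = chi d (- int h * int ((d - a) mod d) * int ((d - b) mod d))"
  proof (rule chi_modeq[OF d0])
    have "(- int h * int ((d - a) mod d) * int ((d - b) mod d)) mod int d
        = (- int h * ((- int a) mod int d) * ((- int b) mod int d)) mod int d"
      using ab by (simp add: int_negmod)
    also have "\<dots> = (- int h * (- int a) * (- int b)) mod int d" by (rule mod3)
    finally show "(- int h * int a * int b) mod int d = (- int h * int ((d - a) mod d) * int ((d - b) mod d)) mod int d"
      by simp
  qed
  also have "\<dots> = wphase d ((d - a) mod d) ((d - b) mod d)"
    using False by (simp add: wphase_def h_def)
  finally show ?thesis .
qed

lemma w1_adj:
  assumes p: "prime d" and ab: "a < d" "b < d" and jk: "j < d" "k < d"
  shows "cnj (weyl1 d a b k j) = weyl1 d ((d - a) mod d) ((d - b) mod d) j k"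
proof -
  have d0: "0 < d" using p prime_gt_0_nat by blast
  show ?thesis
  proof (cases "k = (j + b) mod d")
    case True
    then have c2: "j = (k + (d - b) mod d) mod d" using cond_swap[OF d0 jk(1) jk(2) ab(2)] by simp
    have kk: "int k = (int j + int b) mod int d" using True by (simp add: int_mod)
    have L: "cnj (weyl1 d a b k j) = cnj (wphase d a b) * chi d (- (int a * int k))"
      by (simp add: weyl1_def True[symmetric] cnj_chi)
    have R: "weyl1 d ((d - a) mod d) ((d - b) mod d) j k = wphase d ((d - a) mod d) ((d - b) mod d) * chi d (int ((d - a) mod d * j))"
      by (simp add: weyl1_def c2[symmetric])
    have "chi d (- (int a * int k)) = chi d (- (int a * int b)) * chi d (int ((d - a) mod d * j))"
      unfolding chi_add[symmetric]
    proof (rule chi_modeq[OF d0])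
      have "(- int a * int b + int ((d - a) mod d * j)) mod int d = (- int a * int b + ((- int a) mod int d) * int j) mod int d"
        using ab by (simp add: int_negmod)
      also have "\<dots> = (- int a * int b + (((- int a) mod int d) * int j) mod int d) mod int d" by (rule mod_add_right_eq[symmetric])
      also have "\<dots> = (- int a * int b + (- int a * int j) mod int d) mod int d" by (simp add: mod_mult_left_eq)
      also have "\<dots> = (- int a * (int j + int b)) mod int d" by (subst mod_add_right_eq) (simp add: algebra_simps)
      also have "\<dots> = (- int a * int k) mod int d" unfolding kk by (rule mod_mult_right_eq[symmetric])
      finally show "(- (int a * int k)) mod int d = (- (int a * int b) + int ((d - a) mod d * j)) mod int d"
        by simp
    qed
    then show ?thesis using L R phase_adj[OF p ab]
      by (simp add: mult.assoc)
  next
    case False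
    then have c2: "j \<noteq> (k + (d - b) mod d) mod d" using cond_swap[OF d0 jk(1) jk(2) ab(2)] by simp
    show ?thesis using False c2 by (simp add: weyl1_def)
  qed
qed

lemma w1_zero: "0 < d \<Longrightarrow> k < d \<Longrightarrow> weyl1 d 0 0 j k = (if j = k then 1 else 0)"
  by (simp add: weyl1_def wphase_def)

lemma mod_add_inj: "0 < (d::nat) \<Longrightarrow> j < d \<Longrightarrow> k < d \<Longrightarrow> b < d \<Longrightarrow> (j + b) mod d = (k + b) mod d \<Longrightarrow> j = k"
  using cond_swap[of d j "(j + b) mod d" b] cond_swap[of d k "(k + b) mod d" b] by simp

lemma cnj_mult_self: "cnj z * z = of_real ((cmod z)^2)"
  by (metis complex_norm_square mult.commute)

lemma w1_unit:
  assumes d: "0 < d" and ab: "b < d" and jk: "j < d" "k < d"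
  shows "(\<Sum>m<d. cnj (weyl1 d a b m j) * weyl1 d a b m k) = (if j = k then 1 else 0)"
proof -
  let ?m0 = "(j + b) mod d"
  have "\<And>m. cnj (weyl1 d a b m j) * weyl1 d a b m k = (if m = ?m0 then (if j = k then 1 else 0) else 0)"
  proof -
    fix m
    have "cnj (wphase d a b) * wphase d a b = 1" using cnj_mult_self[of "wphase d a b"] by (simp add: cmod_wphase)
    moreover have "cnj (chi d x) * chi d x = 1" for x using cnj_mult_self[of "chi d x"] by simp
    moreover have "(j + b) mod d = (k + b) mod d \<longleftrightarrow> j = k" using mod_add_inj[OF d jk ab] by auto
    ultimately show "cnj (weyl1 d a b m j) * weyl1 d a b m k = (if m = ?m0 then (if j = k then 1 else 0) else 0)"
      by (auto simp: weyl1_def mult_ac)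
  qed
  then show ?thesis using d by (simp add: sum.delta)
qed

lemma w1_unit2:
  assumes p: "prime d" and ab: "a < d" "b < d" and jk: "j < d" "k < d"
  shows "(\<Sum>m<d. weyl1 d a b j m * cnj (weyl1 d a b k m)) = (if j = k then 1 else 0)"
proof -
  have d: "0 < d" using p prime_gt_0_nat by blast
  define a' where "a' = (d - a) mod d"
  define b' where "b' = (d - b) mod d"
  have ab': "a' < d" "b' < d" using d by (auto simp: a'_def b'_def)
  have aa: "a = (d - a') mod d" "b = (d - b') mod d" using ab by (auto simp: a'_def b'_def negneg)
  have "\<And>m. m < d \<Longrightarrow> weyl1 d a b j m * cnj (weyl1 d a b k m) = cnj (weyl1 d a' b' m j) * weyl1 d a' b' m k"
  proof -
    fix m assume m: "m < d"
    have "weyl1 d a b j m = cnj (weyl1 d a' b' m j)" by (simp add: w1_adj[OF p ab' jk(1) m] aa[symmetric])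
    moreover have "cnj (weyl1 d a b k m) = weyl1 d a' b' m k" using w1_adj[OF p ab m jk(2)] by (simp add: a'_def b'_def)
    ultimately show "weyl1 d a b j m * cnj (weyl1 d a b k m) = cnj (weyl1 d a' b' m j) * weyl1 d a' b' m k" by simp
  qed
  then have "(\<Sum>m<d. weyl1 d a b j m * cnj (weyl1 d a b k m)) = (\<Sum>m<d. cnj (weyl1 d a' b' m j) * weyl1 d a' b' m k)"
    by (intro sum.cong) auto
  also have "\<dots> = (if j = k then 1 else 0)" by (rule w1_unit[OF d ab'(2) jk])
  finally show ?thesis .
qed

lemma w1_trace:
  assumes d: "0 < d" and ab: "a < d" "b < d" and nz: "a \<noteq> 0 \<or> b \<noteq> 0"
  shows "(\<Sum>j<d. weyl1 d a b j j) = 0"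
proof (cases "b = 0")
  case True
  then have a: "a \<noteq> 0" using nz by simp
  have "\<not> int d dvd int a" using a ab by (auto dest: zdvd_imp_le)
  then have "(\<Sum>j<d. chi d (int j * int a)) = 0" using sum_chi[OF d] by blast
  then have "(\<Sum>j<d. chi d (int (a * j))) = 0" by (simp add: mult.commute)
  then show ?thesis using True by (simp add: weyl1_def sum_distrib_left[symmetric])
next
  case False
  have "\<And>j. j < d \<Longrightarrow> j \<noteq> (j + b) mod d"
  proof
    fix j assume j: "j < d" and e: "j = (j + b) mod d"
    then have "(j + b) mod d = (j + 0) mod d" by simp
    then have "b = 0" using mod_add_inj[of d b 0 j] d ab j by (simp add: add.commute)
    then show False using False by simp
  qed
  then show ?thesis by (simp add: weyl1_def)
qed

lemma qbasis_Suc: "qbasis d (Suc n) = (\<lambda>(j, zs). j # zs) ` ({..<d} \<times> qbasis d n)"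
proof
  show "qbasis d (Suc n) \<subseteq> (\<lambda>(j, zs). j # zs) ` ({..<d} \<times> qbasis d n)"
  proof
    fix xs assume "xs \<in> qbasis d (Suc n)"
    then obtain j zs where "xs = j # zs" "j < d" "zs \<in> qbasis d n"
      by (cases xs) (auto simp: qbasis_def)
    then show "xs \<in> (\<lambda>(j, zs). j # zs) ` ({..<d} \<times> qbasis d n)" by force
  qed
qed (auto simp: qbasis_def)

lemma sum_qbasis_prod: "(\<Sum>z\<in>qbasis d n. \<Prod>k<n. f k (z!k)) = (\<Prod>k<n. \<Sum>j<d. (f k j :: complex))"
proof (induction n arbitrary: f)
  case 0
  have "qbasis d 0 = {[]}" by (auto simp: qbasis_def)
  then show ?case by simp
next
  case (Suc n)
  have inj: "inj_on (\<lambda>(j, zs). j # zs) ({..<d} \<times> qbasis d n)" by (auto simp: inj_on_def)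
  have "(\<Sum>z\<in>qbasis d (Suc n). \<Prod>k<Suc n. f k (z!k)) = (\<Sum>(j,zs)\<in>{..<d} \<times> qbasis d n. \<Prod>k<Suc n. f k ((j#zs)!k))"
    unfolding qbasis_Suc by (subst sum.reindex[OF inj]) (simp add: case_prod_beta')
  also have "\<dots> = (\<Sum>(j,zs)\<in>{..<d} \<times> qbasis d n. f 0 j * (\<Prod>k<n. f (Suc k) (zs!k)))"
    by (intro sum.cong refl) (auto simp del: lessThan_Suc prod.lessThan_Suc simp: prod.lessThan_Suc_shift)
  also have "\<dots> = (\<Sum>j<d. \<Sum>zs\<in>qbasis d n. f 0 j * (\<Prod>k<n. f (Suc k) (zs!k)))"
    by (rule sum.cartesian_product[symmetric])
  also have "\<dots> = (\<Sum>j<d. f 0 j) * (\<Prod>k<n. \<Sum>j<d. f (Suc k) j)"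
    by (simp add: sum_distrib_left[symmetric] sum_distrib_right Suc.IH[of "\<lambda>k. f (Suc k)"])
  also have "\<dots> = (\<Prod>k<Suc n. \<Sum>j<d. f k j)" by (simp only: prod.lessThan_Suc_shift)
  finally show ?case .
qed

definition idop :: "nat \<Rightarrow> nat \<Rightarrow> qop" where
  "idop d n = (\<lambda>x y. if x \<in> qbasis d n \<and> y \<in> qbasis d n \<and> x = y then 1 else 0)"

abbreviation W where "W d n v \<equiv> weyl d n v"

lemma weyl_in: "x \<in> qbasis d n \<Longrightarrow> y \<in> qbasis d n \<Longrightarrow>
  weyl d n v x y = (\<Prod>k<n. weyl1 d (fst v ! k) (snd v ! k) (x ! k) (y ! k))"
  by (simp add: weyl_def)

lemma weyl_out: "\<not> (x \<in> qbasis d n \<and> y \<in> qbasis d n) \<Longrightarrow> weyl d n v x y = 0"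
  by (auto simp: weyl_def)

lemma prod_indicator:
  assumes "length x = n" "length y = n"
  shows "(\<Prod>k<n. if x!k = y!k then (1::complex) else 0) = (if x = y then 1 else 0)"
proof (cases "x = y")
  case False
  then obtain k where k: "k < n" "x!k \<noteq> y!k" using assms nth_equalityI by metis
  have "(\<Prod>k<n. if x!k = y!k then (1::complex) else 0) = 0" by (rule prod_zero) (use k in auto)
  then show ?thesis using False by simp
qed simp

lemma qb_nth: "x \<in> qbasis d n \<Longrightarrow> k < n \<Longrightarrow> x ! k < d"
  by (simp add: mem_qbasis)

lemma qb_len: "x \<in> qbasis d n \<Longrightarrow> length x = n"
  by (simp add: mem_qbasis)

lemma weyl_zero: "0 < d \<Longrightarrow> weyl d n (vzero n) = idop d n"
proof (intro ext)
  fix x y assume d: "0 < d"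
  show "weyl d n (vzero n) x y = idop d n x y"
  proof (cases "x \<in> qbasis d n \<and> y \<in> qbasis d n")
    case True
    have "weyl d n (vzero n) x y = (\<Prod>k<n. if x!k = y!k then 1 else 0)" using True
      by (simp add: weyl_in fst_vzero_nth snd_vzero_nth w1_zero[OF d] qb_nth[of y d n])
    also have "\<dots> = (if x = y then 1 else 0)" using True by (intro prod_indicator) (auto simp: qb_len)
    finally show ?thesis using True by (simp add: idop_def)
  qed (auto simp: weyl_def idop_def)
qed

lemma weyl_adj:
  assumes p: "prime d" and v: "v \<in> Vn d n"
  shows "op_adj (weyl d n v) = weyl d n (vneg d v)"
proof (intro ext)
  fix x y
  show "op_adj (weyl d n v) x y = weyl d n (vneg d v) x y"
  proof (cases "x \<in> qbasis d n \<and> y \<in> qbasis d n")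
    case True
    have "op_adj (weyl d n v) x y = (\<Prod>k<n. cnj (weyl1 d (fst v ! k) (snd v ! k) (y ! k) (x ! k)))"
      using True by (simp add: op_adj_def weyl_in)
    also have "\<dots> = (\<Prod>k<n. weyl1 d (fst (vneg d v) ! k) (snd (vneg d v) ! k) (x ! k) (y ! k))"
    proof (intro prod.cong refl)
      fix k assume "k \<in> {..<n}"
      then have k: "k < n" by simp
      have l: "x!k < d" "y!k < d" "fst v ! k < d" "snd v ! k < d" using True v k qb_nth Vn_lt by auto
      show "cnj (weyl1 d (fst v ! k) (snd v ! k) (y ! k) (x ! k)) = weyl1 d (fst (vneg d v) ! k) (snd (vneg d v) ! k) (x ! k) (y ! k)"
        using w1_adj[OF p l(3,4,1,2)] by (simp add: fst_vneg_nth[OF v k] snd_vneg_nth[OF v k])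
    qed
    finally show ?thesis using True by (simp add: weyl_in)
  qed (auto simp: weyl_def op_adj_def)
qed

lemma weyl_unit:
  assumes p: "prime d" and v: "v \<in> Vn d n"
  shows "op_mult d n (op_adj (weyl d n v)) (weyl d n v) = idop d n"
proof (intro ext)
  fix x y
  have d: "0 < d" using p prime_gt_0_nat by blast
  show "op_mult d n (op_adj (weyl d n v)) (weyl d n v) x y = idop d n x y"
  proof (cases "x \<in> qbasis d n \<and> y \<in> qbasis d n")
    case True
    have "op_mult d n (op_adj (weyl d n v)) (weyl d n v) x y =
       (\<Sum>z\<in>qbasis d n. \<Prod>k<n. cnj (weyl1 d (fst v ! k) (snd v ! k) (z ! k) (x ! k)) * weyl1 d (fst v ! k) (snd v ! k) (z ! k) (y ! k))"
      using True by (simp add: op_mult_def op_adj_def weyl_in prod.distrib)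
    also have "\<dots> = (\<Prod>k<n. \<Sum>m<d. cnj (weyl1 d (fst v ! k) (snd v ! k) m (x ! k)) * weyl1 d (fst v ! k) (snd v ! k) m (y ! k))"
      by (rule sum_qbasis_prod)
    also have "\<dots> = (\<Prod>k<n. if x!k = y!k then 1 else 0)"
    proof (intro prod.cong refl)
      fix k assume "k \<in> {..<n}"
      then have k: "k < n" by simp
      have l: "x!k < d" "y!k < d" "fst v ! k < d" "snd v ! k < d" using True v k qb_nth Vn_lt by auto
      show "(\<Sum>m<d. cnj (weyl1 d (fst v ! k) (snd v ! k) m (x ! k)) * weyl1 d (fst v ! k) (snd v ! k) m (y ! k)) = (if x!k = y!k then 1 else 0)"
        using w1_unit[OF d l(4) l(1,2)] by simp
    qed
    also have "\<dots> = (if x = y then 1 else 0)" using True by (intro prod_indicator) (auto simp: qb_len)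
    finally show ?thesis using True by (simp add: idop_def)
  qed (auto simp: op_mult_def idop_def)
qed

lemma weyl_unit2:
  assumes p: "prime d" and v: "v \<in> Vn d n"
  shows "op_mult d n (weyl d n v) (op_adj (weyl d n v)) = idop d n"
proof (intro ext)
  fix x y
  show "op_mult d n (weyl d n v) (op_adj (weyl d n v)) x y = idop d n x y"
  proof (cases "x \<in> qbasis d n \<and> y \<in> qbasis d n")
    case True
    have "op_mult d n (weyl d n v) (op_adj (weyl d n v)) x y =
       (\<Sum>z\<in>qbasis d n. \<Prod>k<n. weyl1 d (fst v ! k) (snd v ! k) (x ! k) (z ! k) * cnj (weyl1 d (fst v ! k) (snd v ! k) (y ! k) (z ! k)))"
      using True by (simp add: op_mult_def op_adj_def weyl_in prod.distrib)
    also have "\<dots> = (\<Prod>k<n. \<Sum>m<d. weyl1 d (fst v ! k) (snd v ! k) (x ! k) m * cnj (weyl1 d (fst v ! k) (snd v ! k) (y ! k) m))"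
      by (rule sum_qbasis_prod)
    also have "\<dots> = (\<Prod>k<n. if x!k = y!k then 1 else 0)"
    proof (intro prod.cong refl)
      fix k assume "k \<in> {..<n}"
      then have k: "k < n" by simp
      have l: "x!k < d" "y!k < d" "fst v ! k < d" "snd v ! k < d" using True v k qb_nth Vn_lt by auto
      show "(\<Sum>m<d. weyl1 d (fst v ! k) (snd v ! k) (x ! k) m * cnj (weyl1 d (fst v ! k) (snd v ! k) (y ! k) m)) = (if x!k = y!k then 1 else 0)"
        using w1_unit2[OF p l(3,4) l(1,2)] by simp
    qed
    also have "\<dots> = (if x = y then 1 else 0)" using True by (intro prod_indicator) (auto simp: qb_len)
    finally show ?thesis using True by (simp add: idop_def)
  qed (auto simp: op_mult_def idop_def)
qed

definition cc :: "nat \<Rightarrow> nat \<Rightarrow> nat list \<times> nat list \<Rightarrow> nat list \<times> nat list \<Rightarrow> complex" where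
  "cc d n u v = (\<Prod>k<n. c1 d (fst u ! k) (snd u ! k) (fst v ! k) (snd v ! k))"

lemma cmod_cc: "cmod (cc d n u v) = 1"
  by (simp add: cc_def prod_norm[symmetric] cmod_c1)

lemma weyl_mult:
  assumes p: "prime d" and u: "u \<in> Vn d n" and v: "v \<in> Vn d n"
  shows "op_mult d n (weyl d n u) (weyl d n v) = op_smult (cc d n u v) (weyl d n (vadd d u v))"
proof (intro ext)
  fix x y
  have d: "0 < d" using p prime_gt_0_nat by blast
  show "op_mult d n (weyl d n u) (weyl d n v) x y = op_smult (cc d n u v) (weyl d n (vadd d u v)) x y"
  proof (cases "x \<in> qbasis d n \<and> y \<in> qbasis d n")
    case True
    have "op_mult d n (weyl d n u) (weyl d n v) x y =
       (\<Sum>z\<in>qbasis d n. \<Prod>k<n. weyl1 d (fst u ! k) (snd u ! k) (x ! k) (z ! k) * weyl1 d (fst v ! k) (snd v ! k) (z ! k) (y ! k))"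
      using True by (simp add: op_mult_def weyl_in prod.distrib)
    also have "\<dots> = (\<Prod>k<n. \<Sum>m<d. weyl1 d (fst u ! k) (snd u ! k) (x ! k) m * weyl1 d (fst v ! k) (snd v ! k) m (y ! k))"
      by (rule sum_qbasis_prod)
    also have "\<dots> = (\<Prod>k<n. c1 d (fst u ! k) (snd u ! k) (fst v ! k) (snd v ! k) *
         weyl1 d (fst (vadd d u v) ! k) (snd (vadd d u v) ! k) (x ! k) (y ! k))"
    proof (intro prod.cong refl)
      fix k assume "k \<in> {..<n}"
      then have k: "k < n" by simp
      have l: "x!k < d" "y!k < d" using True k qb_nth by auto
      show "(\<Sum>m<d. weyl1 d (fst u ! k) (snd u ! k) (x ! k) m * weyl1 d (fst v ! k) (snd v ! k) m (y ! k)) =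
         c1 d (fst u ! k) (snd u ! k) (fst v ! k) (snd v ! k) * weyl1 d (fst (vadd d u v) ! k) (snd (vadd d u v) ! k) (x ! k) (y ! k)"
        using w1_mult[OF d l] by (simp add: fst_vadd_nth[OF u v k] snd_vadd_nth[OF u v k])
    qed
    also have "\<dots> = cc d n u v * weyl d n (vadd d u v) x y"
      using True by (simp add: cc_def weyl_in prod.distrib)
    finally show ?thesis by (simp add: op_smult_def)
  qed (auto simp: op_mult_def weyl_def op_smult_def)
qed

lemma weyl_trace:
  assumes p: "prime d" and v: "v \<in> Vn d n" and nz: "v \<noteq> vzero n"
  shows "op_trace d n (weyl d n v) = 0"
proof -
  have d: "0 < d" using p prime_gt_0_nat by blast
  obtain k where k: "k < n" "fst v ! k \<noteq> 0 \<or> snd v ! k \<noteq> 0" using nz vzero_eq_iff[OF d v] by auto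
  have "op_trace d n (weyl d n v) = (\<Sum>x\<in>qbasis d n. \<Prod>k<n. weyl1 d (fst v ! k) (snd v ! k) (x ! k) (x ! k))"
    by (simp add: op_trace_def weyl_in)
  also have "\<dots> = (\<Prod>k<n. \<Sum>j<d. weyl1 d (fst v ! k) (snd v ! k) j j)" by (rule sum_qbasis_prod)
  also have "\<dots> = 0"
    apply (rule prod_zero, simp)
    using k v d by (intro bexI[of _ k]) (auto simp: w1_trace Vn_lt)
  finally show ?thesis .
qed

lemma trace_idop: "op_trace d n (idop d n) = of_nat (d ^ n)"
  by (simp add: op_trace_def idop_def card_qbasis)

definition osum :: "'a set \<Rightarrow> ('a \<Rightarrow> qop) \<Rightarrow> qop" where
  "osum F h = (\<lambda>x y. \<Sum>v\<in>F. h v x y)"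

lemma op_mult_assoc: "op_mult d n (op_mult d n A B) C = op_mult d n A (op_mult d n B C)"
proof (intro ext)
  fix x y
  show "op_mult d n (op_mult d n A B) C x y = op_mult d n A (op_mult d n B C) x y"
    by (auto simp: op_mult_def sum_distrib_left sum_distrib_right mult.assoc intro: sum.swap)
qed

lemma is_op_mult: "is_op d n (op_mult d n A B)" by (simp add: is_op_def op_mult_def)
lemma is_op_weyl: "is_op d n (weyl d n v)" by (auto simp: is_op_def weyl_def)
lemma is_op_idop: "is_op d n (idop d n)" by (auto simp: is_op_def idop_def)
lemma is_op_adj: "is_op d n A \<Longrightarrow> is_op d n (op_adj A)" by (simp add: is_op_def op_adj_def) blast
lemma is_op_smult: "is_op d n A \<Longrightarrow> is_op d n (op_smult c A)" by (simp add: is_op_def op_smult_def)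
lemma is_op_osum: "(\<And>v. v \<in> F \<Longrightarrow> is_op d n (h v)) \<Longrightarrow> is_op d n (osum F h)"
  by (simp add: is_op_def osum_def)

lemma if_mult1: "(if P then 1 else 0) * (a::complex) = (if P then a else 0)" by simp
lemma if_mult2: "(a::complex) * (if P then 1 else 0) = (if P then a else 0)" by simp

lemma op_mult_idop_left: "is_op d n A \<Longrightarrow> op_mult d n (idop d n) A = A"
proof (intro ext)
  fix x y assume A: "is_op d n A"
  show "op_mult d n (idop d n) A x y = A x y"
  proof (cases "x \<in> qbasis d n \<and> y \<in> qbasis d n")
    case True
    then show ?thesis by (simp add: op_mult_def idop_def if_mult1 if_mult2 sum.delta sum.delta')
  qed (use A in \<open>auto simp: op_mult_def is_op_def\<close>)
qed

lemma op_mult_idop_right: "is_op d n A \<Longrightarrow> op_mult d n A (idop d n) = A"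
proof (intro ext)
  fix x y assume A: "is_op d n A"
  show "op_mult d n A (idop d n) x y = A x y"
  proof (cases "x \<in> qbasis d n \<and> y \<in> qbasis d n")
    case True
    then show ?thesis by (simp add: op_mult_def idop_def if_mult1 if_mult2 sum.delta sum.delta')
  qed (use A in \<open>auto simp: op_mult_def is_op_def\<close>)
qed

lemma op_trace_comm: "op_trace d n (op_mult d n A B) = op_trace d n (op_mult d n B A)"
  unfolding op_trace_def op_mult_def by (simp add: mult.commute) (rule sum.swap)

lemma op_adj_mult: "op_adj (op_mult d n A B) = op_mult d n (op_adj B) (op_adj A)"
  by (auto simp: op_adj_def op_mult_def mult.commute intro!: ext)

lemma op_adj_adj[simp]: "op_adj (op_adj A) = A" by (simp add: op_adj_def)

lemma op_trace_adj: "op_trace d n (op_adj A) = cnj (op_trace d n A)"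
  by (simp add: op_trace_def op_adj_def)

lemma op_mult_smult_left: "op_mult d n (op_smult c A) B = op_smult c (op_mult d n A B)"
  by (auto simp: op_mult_def op_smult_def sum_distrib_left mult.assoc intro!: ext)
lemma op_mult_smult_right: "op_mult d n A (op_smult c B) = op_smult c (op_mult d n A B)"
  by (auto simp: op_mult_def op_smult_def sum_distrib_left mult_ac intro!: ext)
lemma op_trace_smult: "op_trace d n (op_smult c A) = c * op_trace d n A"
  by (simp add: op_trace_def op_smult_def sum_distrib_left)
lemma op_adj_smult: "op_adj (op_smult c A) = op_smult (cnj c) (op_adj A)"
  by (simp add: op_adj_def op_smult_def)
lemma op_smult_smult: "op_smult a (op_smult b A) = op_smult (a * b) A"
  by (simp add: op_smult_def mult.assoc)
lemma op_smult_one[simp]: "op_smult 1 A = A" by (simp add: op_smult_def)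

lemma op_mult_osum_left: "finite F \<Longrightarrow> op_mult d n (osum F h) B = osum F (\<lambda>v. op_mult d n (h v) B)"
  by (auto simp: op_mult_def osum_def sum_distrib_right intro!: ext sum.swap)
lemma op_mult_osum_right: "finite F \<Longrightarrow> op_mult d n A (osum F h) = osum F (\<lambda>v. op_mult d n A (h v))"
  by (auto simp: op_mult_def osum_def sum_distrib_left intro!: ext sum.swap)
lemma op_trace_osum: "op_trace d n (osum F h) = (\<Sum>v\<in>F. op_trace d n (h v))"
  by (simp add: op_trace_def osum_def sum.swap[of _ F])
lemma op_adj_osum: "op_adj (osum F h) = osum F (\<lambda>v. op_adj (h v))"
  by (simp add: op_adj_def osum_def)
lemma op_smult_osum: "op_smult c (osum F h) = osum F (\<lambda>v. op_smult c (h v))"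
  by (simp add: op_smult_def osum_def sum_distrib_left)

lemma osum_cong: "(\<And>v. v \<in> F \<Longrightarrow> h v = h' v) \<Longrightarrow> osum F h = osum F h'"
  by (simp add: osum_def)

lemma osum_reindex: assumes "bij_betw f F G" shows "osum F (\<lambda>v. h (f v)) = osum G h"
  unfolding osum_def by (intro ext) (rule sum.reindex_bij_betw[OF assms])

lemma osum_const: "osum F (\<lambda>v. A) = op_smult (of_nat (card F)) A"
  by (simp add: osum_def op_smult_def)

lemma op_mult_add_left: "op_mult d n (op_add A B) C = op_add (op_mult d n A C) (op_mult d n B C)"
  by (auto simp: op_mult_def op_add_def distrib_right sum.distrib intro!: ext)
lemma op_mult_add_right: "op_mult d n A (op_add B C) = op_add (op_mult d n A B) (op_mult d n A C)"
  by (auto simp: op_mult_def op_add_def distrib_left sum.distrib intro!: ext)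
lemma op_trace_add: "op_trace d n (op_add A B) = op_trace d n A + op_trace d n B"
  by (simp add: op_trace_def op_add_def sum.distrib)
lemma op_adj_add: "op_adj (op_add A B) = op_add (op_adj A) (op_adj B)"
  by (simp add: op_adj_def op_add_def)
lemma is_op_add: "is_op d n A \<Longrightarrow> is_op d n B \<Longrightarrow> is_op d n (op_add A B)"
  by (simp add: is_op_def op_add_def)
lemma op_adj_idop: "op_adj (idop d n) = idop d n"
  by (auto simp: op_adj_def idop_def intro!: ext)

definition hform :: "nat \<Rightarrow> nat \<Rightarrow> qop \<Rightarrow> (nat list \<Rightarrow> complex) \<Rightarrow> (nat list \<Rightarrow> complex) \<Rightarrow> complex" where
  "hform d n \<rho> a b = (\<Sum>x\<in>qbasis d n. \<Sum>y\<in>qbasis d n. cnj (a x) * \<rho> x y * b y)"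

lemma hform_add_left: "hform d n \<rho> (\<lambda>x. a x + b x) c = hform d n \<rho> a c + hform d n \<rho> b c"
  by (simp add: hform_def ring_distribs sum.distrib)
lemma hform_add_right: "hform d n \<rho> a (\<lambda>x. b x + c x) = hform d n \<rho> a b + hform d n \<rho> a c"
  by (simp add: hform_def ring_distribs sum.distrib)
lemma hform_smult_left: "hform d n \<rho> (\<lambda>x. s * a x) b = cnj s * hform d n \<rho> a b"
  by (simp add: hform_def sum_distrib_left mult_ac)
lemma hform_smult_right: "hform d n \<rho> a (\<lambda>x. s * b x) = s * hform d n \<rho> a b"
  by (simp add: hform_def sum_distrib_left mult_ac)
lemma hform_herm: "op_adj \<rho> = \<rho> \<Longrightarrow> hform d n \<rho> b a = cnj (hform d n \<rho> a b)"
proof -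
  assume h: "op_adj \<rho> = \<rho>"
  have r: "cnj (\<rho> x y) = \<rho> y x" for x y using fun_cong[OF fun_cong[OF h, of y], of x] by (simp add: op_adj_def)
  have "cnj (hform d n \<rho> a b) = (\<Sum>x\<in>qbasis d n. \<Sum>y\<in>qbasis d n. cnj (b y) * \<rho> y x * a x)"
    unfolding hform_def by (simp add: r mult_ac)
  also have "\<dots> = hform d n \<rho> b a" unfolding hform_def by (rule sum.swap)
  finally show ?thesis by simp
qed

lemma hform_e: "x0 \<in> qbasis d n \<Longrightarrow>
  hform d n \<rho> (\<lambda>x. if x = x0 then c else 0) v = cnj c * (\<Sum>y\<in>qbasis d n. \<rho> x0 y * v y)"
proof -
  assume x0: "x0 \<in> qbasis d n"
  have "\<And>x. (\<Sum>y\<in>qbasis d n. cnj (if x = x0 then c else 0) * \<rho> x y * v y)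
     = (if x = x0 then cnj c * (\<Sum>y\<in>qbasis d n. \<rho> x0 y * v y) else 0)"
    by (auto simp: sum_distrib_left mult_ac)
  then show ?thesis using x0 unfolding hform_def by (simp add: sum.delta)
qed

lemma quad_nonneg_lin0:
  fixes a b :: real
  assumes h: "\<And>s. 0 \<le> 2 * s * a + s^2 * b" and b: "0 \<le> b"
  shows "a = 0"
proof -
  define s where "s = - a / (b + 1)"
  have bs: "(b + 1) * s = - a" using b by (simp add: s_def)
  have "0 \<le> 2 * s * a + s^2 * b" by (rule h)
  then have "0 \<le> (b + 1)^2 * (2 * s * a + s^2 * b)" by simp
  also have "(b + 1)^2 * (2 * s * a + s^2 * b) = 2*(b+1)*a*((b+1)*s) + ((b+1)*s)^2 * b"
    by (simp add: algebra_simps power2_eq_square)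
  also have "\<dots> = a^2 * (- b - 2)" unfolding bs by (simp add: algebra_simps power2_eq_square)
  finally have 1: "0 \<le> a^2 * (- b - 2)" .
  have 2: "a^2 * (- b - 2) \<le> 0" using b by (intro mult_nonneg_nonpos) auto
  have "a^2 * (- b - 2) = 0" using 1 2 by linarith
  then have "a^2 = 0" using b by simp
  then show ?thesis by simp
qed

lemma psd_zero:
  assumes st: "is_state d n \<rho>" and z: "Re (hform d n \<rho> v v) = 0" and x0: "x0 \<in> qbasis d n"
  shows "(\<Sum>y\<in>qbasis d n. \<rho> x0 y * v y) = 0"
proof -
  have herm: "op_adj \<rho> = \<rho>" and psd: "\<And>w. 0 \<le> Re (hform d n \<rho> w w)"
    using st by (auto simp: is_state_def hform_def)
  let ?r = "\<Sum>y\<in>qbasis d n. \<rho> x0 y * v y"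
  have key: "Re (cnj c * ?r) = 0" for c
  proof -
    define e where "e = (\<lambda>x. if x = x0 then c else 0)"
    have he: "hform d n \<rho> e v = cnj c * ?r" unfolding e_def by (rule hform_e[OF x0])
    have expand: "Re (hform d n \<rho> (\<lambda>x. v x + of_real s * e x) (\<lambda>x. v x + of_real s * e x))
        = 2 * s * Re (cnj c * ?r) + s^2 * Re (hform d n \<rho> e e)" for s
    proof -
      have "hform d n \<rho> (\<lambda>x. v x + of_real s * e x) (\<lambda>x. v x + of_real s * e x)
          = hform d n \<rho> v v + of_real s * hform d n \<rho> v e + of_real s * hform d n \<rho> e v
            + of_real s * of_real s * hform d n \<rho> e e"
        by (simp add: hform_add_left hform_add_right hform_smult_left hform_smult_right algebra_simps)
      moreover have "Re (hform d n \<rho> v e) = Re (hform d n \<rho> e v)" using hform_herm[OF herm, where b=v and a=e] by simp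
      ultimately show ?thesis using z he by (simp add: power2_eq_square)
    qed
    show ?thesis
      apply (rule quad_nonneg_lin0[where b = "Re (hform d n \<rho> e e)"])
      using psd expand by metis+
  qed
  have "Re ?r = 0" using key[of 1] by simp
  moreover have "Im ?r = 0" using key[of "\<i>"] by simp
  ultimately show ?thesis by (simp add: complex_eq_iff)
qed

lemma state_props:
  assumes "is_state d n \<rho>"
  shows "is_op d n \<rho>" "op_adj \<rho> = \<rho>" "op_trace d n \<rho> = 1" "\<And>w. 0 \<le> Re (hform d n \<rho> w w)"
  using assms by (auto simp: is_state_def hform_def)

lemma trace_rho_adj:
  assumes "op_adj \<rho> = \<rho>"
  shows "op_trace d n (op_mult d n \<rho> (op_adj U)) = cnj (op_trace d n (op_mult d n \<rho> U))"
proof -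
  have "op_mult d n \<rho> (op_adj U) = op_adj (op_mult d n U \<rho>)" using assms by (simp add: op_adj_mult)
  then show ?thesis by (simp add: op_trace_adj op_trace_comm)
qed

lemma trace_hform:
  "op_trace d n (op_mult d n (op_adj A) (op_mult d n \<rho> A)) = (\<Sum>j\<in>qbasis d n. hform d n \<rho> (\<lambda>x. A x j) (\<lambda>x. A x j))"
  unfolding op_trace_def hform_def op_mult_def op_adj_def
  by (intro sum.cong refl) (simp add: sum_distrib_left mult.assoc)

lemma eig_right:
  assumes st: "is_state d n \<rho>" and U: "is_op d n U" and uu: "op_mult d n U (op_adj U) = idop d n"
    and m: "cmod (op_trace d n (op_mult d n \<rho> U)) = 1"
  shows "op_mult d n \<rho> U = op_smult (op_trace d n (op_mult d n \<rho> U)) \<rho>"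
proof -
  note sp = state_props[OF st]
  define \<mu> where "\<mu> = op_trace d n (op_mult d n \<rho> U)"
  have mm: "\<mu> * cnj \<mu> = 1" "cnj \<mu> * \<mu> = 1" using m cnj_mult_self[of \<mu>] by (auto simp: \<mu>_def mult.commute)
  define A where "A = op_add U (op_smult (- \<mu>) (idop d n))"
  have Aadj: "op_adj A = op_add (op_adj U) (op_smult (- cnj \<mu>) (idop d n))"
    by (simp add: A_def op_adj_add op_adj_smult op_adj_idop)
  have AA: "op_mult d n A (op_adj A) = op_add (op_add (idop d n) (op_smult (- cnj \<mu>) U))
       (op_add (op_smult (- \<mu>) (op_adj U)) (op_smult (\<mu> * cnj \<mu>) (idop d n)))"
    unfolding Aadj unfolding A_def
    apply (simp add: op_mult_add_left op_mult_add_right op_mult_smult_left op_mult_smult_right uu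
        op_mult_idop_left op_mult_idop_right U is_op_adj is_op_idop op_smult_smult mult.commute)
    by (rule ext)+ (simp add: op_add_def op_smult_def algebra_simps)
  have "op_trace d n (op_mult d n \<rho> (op_mult d n A (op_adj A))) =
      op_trace d n \<rho> + (- cnj \<mu>) * \<mu> + (- \<mu>) * cnj \<mu> + \<mu> * cnj \<mu> * op_trace d n \<rho>"
    unfolding AA
    by (simp add: op_mult_add_right op_mult_smult_right op_trace_add op_trace_smult
        op_mult_idop_right sp(1) trace_rho_adj[OF sp(2)] \<mu>_def)
  also have "\<dots> = 0" using mm sp(3) by simp
  finally have t0: "op_trace d n (op_mult d n \<rho> (op_mult d n A (op_adj A))) = 0" .
  have "op_trace d n (op_mult d n (op_adj A) (op_mult d n \<rho> A)) = op_trace d n (op_mult d n \<rho> (op_mult d n A (op_adj A)))"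
    by (simp add: op_trace_comm[of d n "op_adj A"] op_mult_assoc)
  then have "(\<Sum>j\<in>qbasis d n. hform d n \<rho> (\<lambda>x. A x j) (\<lambda>x. A x j)) = 0" using t0 trace_hform by metis
  then have "(\<Sum>j\<in>qbasis d n. Re (hform d n \<rho> (\<lambda>x. A x j) (\<lambda>x. A x j))) = 0" by (metis Re_sum zero_complex.sel(1))
  then have z: "\<forall>j\<in>qbasis d n. Re (hform d n \<rho> (\<lambda>x. A x j) (\<lambda>x. A x j)) = 0"
    using sum_nonneg_eq_0_iff[of "qbasis d n" "\<lambda>j. Re (hform d n \<rho> (\<lambda>x. A x j) (\<lambda>x. A x j))"] sp(4) by simp
  have rA: "op_mult d n \<rho> A = op_add (op_mult d n \<rho> U) (op_smult (- \<mu>) \<rho>)"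
    by (simp add: A_def op_mult_add_right op_mult_smult_right op_mult_idop_right sp(1))
  show ?thesis
  proof (intro ext)
    fix x y
    have "op_mult d n \<rho> A x y = 0"
    proof (cases "x \<in> qbasis d n \<and> y \<in> qbasis d n")
      case True
      then show ?thesis using psd_zero[OF st z[rule_format, of y], of x] by (simp add: op_mult_def)
    qed (auto simp: op_mult_def)
    then show "op_mult d n \<rho> U x y = op_smult (op_trace d n (op_mult d n \<rho> U)) \<rho> x y"
      unfolding rA by (simp add: op_add_def op_smult_def \<mu>_def[symmetric])
  qed
qed

lemma eig_both:
  assumes st: "is_state d n \<rho>" and U: "is_op d n U" and uu: "op_mult d n U (op_adj U) = idop d n"
    and uu2: "op_mult d n (op_adj U) U = idop d n"
    and m: "cmod (op_trace d n (op_mult d n \<rho> U)) = 1"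
  shows "op_mult d n \<rho> U = op_smult (op_trace d n (op_mult d n \<rho> U)) \<rho>"
    and "op_mult d n U \<rho> = op_smult (op_trace d n (op_mult d n \<rho> U)) \<rho>"
proof -
  note sp = state_props[OF st]
  show "op_mult d n \<rho> U = op_smult (op_trace d n (op_mult d n \<rho> U)) \<rho>" by (rule eig_right[OF st U uu m])
  have m2: "cmod (op_trace d n (op_mult d n \<rho> (op_adj U))) = 1" using m by (simp add: trace_rho_adj[OF sp(2)])
  have "op_mult d n \<rho> (op_adj U) = op_smult (op_trace d n (op_mult d n \<rho> (op_adj U))) \<rho>"
    by (rule eig_right[OF st is_op_adj[OF U] _ m2]) (simp add: uu2)
  then have "op_adj (op_mult d n \<rho> (op_adj U)) = op_adj (op_smult (cnj (op_trace d n (op_mult d n \<rho> U))) \<rho>)"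
    by (simp add: trace_rho_adj[OF sp(2)])
  then show "op_mult d n U \<rho> = op_smult (op_trace d n (op_mult d n \<rho> U)) \<rho>"
    by (simp add: op_adj_mult op_adj_smult sp(2))
qed

lemma proj_diag:
  assumes P: "is_projection d n P" and x: "x \<in> qbasis d n"
  shows "P x x = of_real (\<Sum>z\<in>qbasis d n. (cmod (P x z))^2)"
proof -
  have adj: "P z x = cnj (P x z)" for z using P unfolding is_projection_def
    by (metis op_adj_def)
  have "P x x = op_mult d n P P x x" using P by (simp add: is_projection_def)
  also have "\<dots> = (\<Sum>z\<in>qbasis d n. P x z * cnj (P x z))" using x by (simp add: op_mult_def adj)
  also have "\<dots> = (\<Sum>z\<in>qbasis d n. of_real ((cmod (P x z))^2))" by (intro sum.cong refl) (metis complex_norm_square)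
  finally show ?thesis by simp
qed

lemma two_ab: "0 < (s::real) \<Longrightarrow> 2 * s * (a * b) \<le> s^2 * a^2 + b^2"
proof -
  have "0 \<le> (s * a - b)^2" by simp
  then show "2 * s * (a * b) \<le> s^2 * a^2 + b^2" by (simp add: power2_eq_square algebra_simps)
qed

lemma proj_trace_ge1:
  assumes P: "is_projection d n P" and nz: "P \<noteq> (\<lambda>x y. 0)"
  shows "1 \<le> Re (op_trace d n P)"
proof -
  let ?B = "qbasis d n"
  have isop: "is_op d n P" using P by (simp add: is_projection_def)
  have adj: "P z y = cnj (P y z)" for z y using P unfolding is_projection_def by (metis op_adj_def)
  have PP: "op_mult d n P P = P" using P by (simp add: is_projection_def)
  obtain x0 y0 where xy: "P x0 y0 \<noteq> 0" using nz by (meson ext)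
  then have x0: "x0 \<in> ?B" and y0: "y0 \<in> ?B" using isop by (auto simp: is_op_def)
  define s where "s = (\<Sum>z\<in>?B. (cmod (P x0 z))^2)"
  have "0 < (cmod (P x0 y0))^2" using xy by simp
  moreover have "(cmod (P x0 y0))^2 \<le> s" unfolding s_def by (rule member_le_sum) (use y0 in auto)
  ultimately have s0: "0 < s" by linarith
  define T where "T = (\<Sum>y\<in>?B. \<Sum>z\<in>?B. (cmod (P y z))^2)"
  have T: "Re (op_trace d n P) = T" unfolding T_def op_trace_def
    by (simp add: Re_sum proj_diag[OF P])
  define u where "u = (\<lambda>y. P y x0)"
  have us: "(\<Sum>y\<in>?B. (cmod (u y))^2) = s" unfolding u_def s_def by (simp add: adj[of _ x0])
  have "(\<Sum>y\<in>?B. \<Sum>z\<in>?B. cnj (u y) * P y z * u z) = (\<Sum>y\<in>?B. cnj (u y) * op_mult d n P P y x0)"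
    using x0 by (simp add: op_mult_def u_def sum_distrib_left mult.assoc)
  also have "\<dots> = (\<Sum>y\<in>?B. of_real ((cmod (u y))^2))" unfolding PP u_def
    by (intro sum.cong refl) (metis complex_norm_square mult.commute)
  also have "\<dots> = of_real s" unfolding us[symmetric] by (simp only: of_real_sum)
  finally have e1: "(\<Sum>y\<in>?B. \<Sum>z\<in>?B. cnj (u y) * P y z * u z) = of_real s" .
  have "s = Re (\<Sum>y\<in>?B. \<Sum>z\<in>?B. cnj (u y) * P y z * u z)" using e1 by simp
  also have "\<dots> \<le> (\<Sum>y\<in>?B. \<Sum>z\<in>?B. cmod (P y z) * (cmod (u y) * cmod (u z)))"
    unfolding Re_sum
    by (intro sum_mono) (metis complex_Re_le_cmod norm_mult complex_mod_cnj mult.commute mult.left_commute)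
  finally have sX: "s \<le> (\<Sum>y\<in>?B. \<Sum>z\<in>?B. cmod (P y z) * (cmod (u y) * cmod (u z)))" .
  have eX: "(\<Sum>y\<in>?B. \<Sum>z\<in>?B. 2 * s * (cmod (P y z) * (cmod (u y) * cmod (u z))))
     = 2 * s * (\<Sum>y\<in>?B. \<Sum>z\<in>?B. cmod (P y z) * (cmod (u y) * cmod (u z)))"
    by (simp add: sum_distrib_left)
  have "2 * s * s \<le> (\<Sum>y\<in>?B. \<Sum>z\<in>?B. 2 * s * (cmod (P y z) * (cmod (u y) * cmod (u z))))"
    unfolding eX using sX s0 by simp
  also have "\<dots> \<le> (\<Sum>y\<in>?B. \<Sum>z\<in>?B. s^2 * (cmod (P y z))^2 + (cmod (u y) * cmod (u z))^2)"
    by (intro sum_mono two_ab s0)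
  also have "\<dots> = s^2 * T + (\<Sum>y\<in>?B. (cmod (u y))^2) * (\<Sum>z\<in>?B. (cmod (u z))^2)"
    using sum_product[of "\<lambda>y. (cmod (u y))^2" ?B "\<lambda>z. (cmod (u z))^2" ?B]
    by (simp add: T_def sum.distrib sum_distrib_left power_mult_distrib)
  also have "\<dots> = s^2 * T + s^2" using us by (simp add: power2_eq_square)
  finally have "2 * s^2 \<le> s^2 * T + s^2" by (simp add: power2_eq_square)
  then have "s^2 * 1 \<le> s^2 * T" by simp
  then have "1 \<le> T" using s0 by simp
  then show ?thesis using T by simp
qed

lemma lam_unit: "cmod z = 1 \<Longrightarrow> cnj z * z = 1"
  using cnj_mult_self[of z] by simp
lemma lam_unit': "cmod z = 1 \<Longrightarrow> z * cnj z = 1"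
  using lam_unit by (simp add: mult.commute)

locale qs =
  fixes d n :: nat and \<rho> :: qop
  assumes p: "prime d" and st: "is_state d n \<rho>"
begin

lemma d0: "0 < d" using p prime_gt_0_nat by blast

lemmas sp = state_props[OF st]

definition lam where "lam v = op_trace d n (op_mult d n \<rho> (weyl d n v))"
definition T where "T = {v \<in> Vn d n. cmod (lam v) = 1}"
definition g where "g v = op_smult (cnj (lam v)) (weyl d n v)"

lemma T_V: "v \<in> T \<Longrightarrow> v \<in> Vn d n" by (simp add: T_def)
lemma T_lam: "v \<in> T \<Longrightarrow> cmod (lam v) = 1" by (simp add: T_def)

lemma lam_neg: "v \<in> Vn d n \<Longrightarrow> lam (vneg d v) = cnj (lam v)"
  unfolding lam_def using weyl_adj[OF p] trace_rho_adj[OF sp(2)] by metis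

lemma charfun_eq: "v \<in> Vn d n \<Longrightarrow> charfun d n \<rho> v = cnj (lam v)"
  using lam_neg by (simp add: charfun_def lam_def)

lemma lam_zero: "lam (vzero n) = 1"
  unfolding lam_def weyl_zero[OF d0] by (simp add: op_mult_idop_right sp(1) sp(3))

lemma zero_T: "vzero n \<in> T" by (simp add: T_def lam_zero vzero_Vn[OF d0])

lemma neg_T: "v \<in> T \<Longrightarrow> vneg d v \<in> T"
  by (simp add: T_def lam_neg vneg_Vn[OF d0])

lemma eig: assumes v: "v \<in> T"
  shows "op_mult d n \<rho> (weyl d n v) = op_smult (lam v) \<rho>" "op_mult d n (weyl d n v) \<rho> = op_smult (lam v) \<rho>"
  using eig_both[OF st is_op_weyl weyl_unit2[OF p T_V[OF v]] weyl_unit[OF p T_V[OF v]]] T_lam[OF v]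
  unfolding lam_def by auto

lemma lam_add: assumes u: "u \<in> T" and v: "v \<in> T"
  shows "cc d n u v * lam (vadd d u v) = lam u * lam v"
proof -
  have "op_trace d n (op_mult d n \<rho> (op_mult d n (weyl d n u) (weyl d n v))) = lam u * lam v"
    unfolding op_mult_assoc[symmetric] eig(1)[OF u]
    by (simp add: op_mult_smult_left op_trace_smult lam_def)
  then show ?thesis
    unfolding weyl_mult[OF p T_V[OF u] T_V[OF v]] by (simp add: op_mult_smult_right op_trace_smult lam_def)
qed

lemma add_T: assumes u: "u \<in> T" and v: "v \<in> T" shows "vadd d u v \<in> T"
proof -
  have "cmod (cc d n u v * lam (vadd d u v)) = 1" using lam_add[OF u v] T_lam[OF u] T_lam[OF v] by (simp add: norm_mult)
  then have "cmod (lam (vadd d u v)) = 1" by (simp add: norm_mult cmod_cc)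
  then show ?thesis by (simp add: T_def vadd_Vn[OF d0 T_V[OF u] T_V[OF v]])
qed

lemma g_mult: assumes u: "u \<in> T" and v: "v \<in> T"
  shows "op_mult d n (g u) (g v) = g (vadd d u v)"
proof -
  let ?w = "vadd d u v"
  have w: "cmod (lam ?w) = 1" using add_T[OF u v] T_lam by blast
  have "cnj (lam u) * cnj (lam v) * cc d n u v = cnj (lam ?w)"
  proof -
    have "cnj (lam u) * cnj (lam v) * cc d n u v * lam ?w = cnj (lam u) * lam u * (cnj (lam v) * lam v)"
      using lam_add[OF u v] by (simp add: mult_ac)
    also have "\<dots> = 1" using lam_unit T_lam u v by simp
    also have "\<dots> = cnj (lam ?w) * lam ?w" using lam_unit[OF w] by simp
    finally show ?thesis using w by (metis mult_cancel_right norm_zero zero_neq_one)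
  qed
  then show ?thesis
    unfolding g_def op_mult_smult_left op_mult_smult_right weyl_mult[OF p T_V[OF u] T_V[OF v]] op_smult_smult
    by (simp add: mult_ac)
qed

lemma g_adj: "v \<in> T \<Longrightarrow> op_adj (g v) = g (vneg d v)"
  unfolding g_def by (simp add: op_adj_smult weyl_adj[OF p T_V] lam_neg T_V)

lemma g_rho: "v \<in> T \<Longrightarrow> op_mult d n (g v) \<rho> = \<rho>"
  unfolding g_def by (simp add: op_mult_smult_left eig(2) op_smult_smult lam_unit T_lam)

lemma g_zero: "g (vzero n) = idop d n"
  by (simp add: g_def lam_zero weyl_zero[OF d0])

lemma is_op_g: "is_op d n (g v)" by (simp add: g_def is_op_smult is_op_weyl)

lemma weyl_g: "v \<in> T \<Longrightarrow> weyl d n v = op_smult (lam v) (g v)"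
  by (simp add: g_def op_smult_smult lam_unit' T_lam)

lemma smult_cancel: assumes c: "c \<noteq> 0" and e: "op_smult c A = op_smult c B" shows "A = B"
proof (intro ext)
  fix x y
  have "c * A x y = c * B x y" using fun_cong[OF fun_cong[OF e, of x], of y] by (simp add: op_smult_def)
  then show "A x y = B x y" using c by simp
qed

lemma commute_T: assumes u: "u \<in> T" and v: "v \<in> T"
  shows "op_mult d n (weyl d n u) (weyl d n v) = op_mult d n (weyl d n v) (weyl d n u)"
proof -
  have "op_mult d n (g u) (g v) = op_mult d n (g v) (g u)"
    using g_mult[OF u v] g_mult[OF v u] vadd_comm[OF T_V[OF u] T_V[OF v]] by simp
  then have "op_smult (cnj (lam u) * cnj (lam v)) (op_mult d n (weyl d n u) (weyl d n v)) =
             op_smult (cnj (lam u) * cnj (lam v)) (op_mult d n (weyl d n v) (weyl d n u))"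
    unfolding g_def op_mult_smult_left op_mult_smult_right op_smult_smult by (simp add: mult_ac)
  moreover have "cnj (lam u) * cnj (lam v) \<noteq> 0" using T_lam[OF u] T_lam[OF v] by auto
  ultimately show ?thesis using smult_cancel by blast
qed

lemma vadd_cancel: assumes u: "u \<in> Vn d n" and v: "v \<in> Vn d n" shows "vadd d (vneg d u) (vadd d u v) = v"
proof -
  have "vadd d (vneg d u) (vadd d u v) = vadd d (vadd d (vneg d u) u) v"
    by (rule vadd_assoc[OF d0 vneg_Vn[OF d0 u] u v, symmetric])
  also have "\<dots> = v" using vadd_neg[OF d0 u] vadd_zero[OF d0 v] by simp
  finally show ?thesis .
qed

lemma vadd_cancel2: assumes u: "u \<in> Vn d n" and v: "v \<in> Vn d n" shows "vadd d u (vadd d (vneg d u) v) = v"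
  using vadd_cancel[OF vneg_Vn[OF d0 u] v] vneg_vneg[OF d0 u] by simp

lemma bij_add: assumes u: "u \<in> T" shows "bij_betw (vadd d u) T T"
proof (rule bij_betw_byWitness[where f' = "vadd d (vneg d u)"])
  show "\<forall>a\<in>T. vadd d (vneg d u) (vadd d u a) = a" using vadd_cancel[OF T_V[OF u]] T_V by blast
  show "\<forall>a\<in>T. vadd d u (vadd d (vneg d u) a) = a" using vadd_cancel2[OF T_V[OF u]] T_V by blast
  show "vadd d u ` T \<subseteq> T" using add_T[OF u] by blast
  show "vadd d (vneg d u) ` T \<subseteq> T" using add_T[OF neg_T[OF u]] by blast
qed

lemma bij_add_r: "v \<in> T \<Longrightarrow> bij_betw (\<lambda>u. vadd d u v) T T"
proof -
  assume v: "v \<in> T"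
  have "bij_betw (vadd d v) T T" by (rule bij_add[OF v])
  moreover have "\<And>u. u \<in> T \<Longrightarrow> vadd d u v = vadd d v u" using v T_V vadd_comm by blast
  ultimately show ?thesis using bij_betw_cong by (metis (no_types, lifting))
qed

lemma bij_neg: "bij_betw (vneg d) T T"
proof (rule bij_betw_byWitness[where f' = "vneg d"])
  show "\<forall>a\<in>T. vneg d (vneg d a) = a" using vneg_vneg[OF d0] T_V by blast
  then show "\<forall>a\<in>T. vneg d (vneg d a) = a" .
  show "vneg d ` T \<subseteq> T" using neg_T by blast
  then show "vneg d ` T \<subseteq> T" .
qed

lemma finite_T: "finite T" by (rule finite_subset[of _ "Vn d n"]) (auto simp: T_V)
lemma T_ne: "T \<noteq> {}" using zero_T by auto
lemma cardT_pos: "0 < card T" using finite_T T_ne by (simp add: card_gt_0_iff)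

end

lemma if_mult_zero: "(if P then a else 0) * (b::complex) = (if P then a * b else 0)" by simp

lemma osum_in_cstar:
  assumes "finite F" "F \<noteq> {}" "\<And>v. v \<in> F \<Longrightarrow> h v \<in> cstar_gen d n G"
  shows "osum F h \<in> cstar_gen d n G"
  using assms
proof (induction F rule: finite_ne_induct)
  case (singleton x)
  have "osum {x} h = h x" by (simp add: osum_def)
  then show ?case using singleton by simp
next
  case (insert x F)
  have "osum (insert x F) h = op_add (h x) (osum F h)" using insert by (simp add: osum_def op_add_def)
  then show ?case using insert by (auto intro: cstar_gen.add)
qed

context qs
begin

definition P where "P = op_smult (1 / of_nat (card T)) (osum T g)"
definition sp where "sp f = osum T (\<lambda>v. op_smult (f v) (g v))"

lemma P_mult_g: assumes v: "v \<in> T" shows "op_mult d n P (g v) = P"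
proof -
  have "op_mult d n (osum T g) (g v) = osum T (\<lambda>u. op_mult d n (g u) (g v))"
    by (rule op_mult_osum_left[OF finite_T])
  also have "\<dots> = osum T (\<lambda>u. g (vadd d u v))" by (rule osum_cong) (simp add: g_mult v)
  also have "\<dots> = osum T g" by (rule osum_reindex[OF bij_add_r[OF v]])
  finally show ?thesis unfolding P_def by (simp add: op_mult_smult_left)
qed

lemma P_rho: "op_mult d n P \<rho> = \<rho>"
proof -
  have "op_mult d n (osum T g) \<rho> = osum T (\<lambda>u. op_mult d n (g u) \<rho>)"
    by (rule op_mult_osum_left[OF finite_T])
  also have "\<dots> = osum T (\<lambda>u. \<rho>)" by (rule osum_cong) (simp add: g_rho)
  also have "\<dots> = op_smult (of_nat (card T)) \<rho>" by (rule osum_const)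
  finally show ?thesis unfolding P_def using cardT_pos by (simp add: op_mult_smult_left op_smult_smult)
qed

lemma P_adj: "op_adj P = P"
proof -
  have "op_adj (osum T g) = osum T (\<lambda>v. g (vneg d v))" unfolding op_adj_osum by (rule osum_cong) (simp add: g_adj)
  also have "\<dots> = osum T g" by (rule osum_reindex[OF bij_neg])
  finally show ?thesis unfolding P_def by (simp add: op_adj_smult)
qed

lemma P_idem: "op_mult d n P P = P"
proof -
  have "op_mult d n P (osum T g) = osum T (\<lambda>v. op_mult d n P (g v))"
    by (rule op_mult_osum_right[OF finite_T])
  also have "\<dots> = osum T (\<lambda>v. P)" by (rule osum_cong) (simp add: P_mult_g)
  also have "\<dots> = op_smult (of_nat (card T)) P" by (rule osum_const)
  finally have "op_mult d n P (osum T g) = op_smult (of_nat (card T)) P" .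
  then show ?thesis using cardT_pos
    by (subst (2) P_def) (simp add: op_mult_smult_right op_smult_smult)
qed

lemma is_op_P: "is_op d n P"
  unfolding P_def by (intro is_op_smult is_op_osum is_op_g)

lemma P_projection: "is_projection d n P"
  by (simp add: is_projection_def is_op_P P_adj P_idem)

lemma rho_nz: "\<rho> \<noteq> (\<lambda>x y. 0)"
  using sp(3) by (auto simp: op_trace_def)

lemma P_nz: "P \<noteq> (\<lambda>x y. 0)"
proof
  assume "P = (\<lambda>x y. 0)"
  moreover have "op_mult d n (\<lambda>x y. 0) \<rho> = (\<lambda>x y. 0)" by (intro ext) (simp add: op_mult_def)
  ultimately have "op_mult d n P \<rho> = (\<lambda>x y. 0)" by simp
  then show False using P_rho rho_nz by simp
qed

lemma g_in: "v \<in> T \<Longrightarrow> g v \<in> cstar_gen d n (weyl d n ` T)"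
  unfolding g_def by (intro cstar_gen.smult cstar_gen.gen) simp

lemma P_in: "P \<in> cstar_gen d n (weyl d n ` T)"
  unfolding P_def by (intro cstar_gen.smult osum_in_cstar finite_T T_ne g_in)

lemma sp_gen: "v \<in> T \<Longrightarrow> weyl d n v = sp (\<lambda>u. if u = v then lam v else 0)"
  unfolding sp_def weyl_g[of v]
  by (intro ext) (simp add: osum_def op_smult_def if_mult_zero sum.delta finite_T)

lemma sp_add: "op_add (sp f1) (sp f2) = sp (\<lambda>v. f1 v + f2 v)"
  by (intro ext) (simp add: sp_def osum_def op_add_def op_smult_def sum.distrib ring_distribs)

lemma sp_smult: "op_smult c (sp f) = sp (\<lambda>v. c * f v)"
  by (intro ext) (simp add: sp_def osum_def op_smult_def sum_distrib_left mult.assoc)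

lemma sp_adj: "op_adj (sp f) = sp (\<lambda>w. cnj (f (vneg d w)))"
proof -
  have "op_adj (sp f) = osum T (\<lambda>v. (\<lambda>w. op_smult (cnj (f (vneg d w))) (g w)) (vneg d v))"
    unfolding sp_def op_adj_osum
    by (rule osum_cong) (simp add: op_adj_smult g_adj vneg_vneg[OF d0 T_V])
  also have "\<dots> = sp (\<lambda>w. cnj (f (vneg d w)))" unfolding sp_def by (rule osum_reindex[OF bij_neg])
  finally show ?thesis .
qed

lemma sp_mult: "op_mult d n (sp f1) (sp f2) = sp (\<lambda>w. \<Sum>u\<in>T. f1 u * f2 (vadd d (vneg d u) w))"
proof -
  have inner: "osum T (\<lambda>v. op_smult (f2 v) (op_mult d n (g u) (g v)))
       = osum T (\<lambda>w. op_smult (f2 (vadd d (vneg d u) w)) (g w))" if u: "u \<in> T" for u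
  proof -
    have "osum T (\<lambda>v. op_smult (f2 v) (op_mult d n (g u) (g v)))
        = osum T (\<lambda>v. (\<lambda>w. op_smult (f2 (vadd d (vneg d u) w)) (g w)) (vadd d u v))"
      by (rule osum_cong) (simp add: g_mult u vadd_cancel T_V u)
    also have "\<dots> = osum T (\<lambda>w. op_smult (f2 (vadd d (vneg d u) w)) (g w))"
      by (rule osum_reindex[OF bij_add[OF u]])
    finally show ?thesis .
  qed
  have "op_mult d n (sp f1) (sp f2) = osum T (\<lambda>u. op_smult (f1 u) (osum T (\<lambda>v. op_smult (f2 v) (op_mult d n (g u) (g v)))))"
    unfolding sp_def[of f1] op_mult_osum_left[OF finite_T]
    by (rule osum_cong) (simp add: sp_def op_mult_smult_left op_mult_osum_right[OF finite_T] op_mult_smult_right op_smult_osum op_smult_smult mult.commute)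
  also have "\<dots> = osum T (\<lambda>u. op_smult (f1 u) (osum T (\<lambda>w. op_smult (f2 (vadd d (vneg d u) w)) (g w))))"
    by (rule osum_cong) (simp add: inner)
  also have "\<dots> = sp (\<lambda>w. \<Sum>u\<in>T. f1 u * f2 (vadd d (vneg d u) w))"
    unfolding sp_def
    by (intro ext) (simp add: osum_def op_smult_def sum_distrib_left sum_distrib_right mult.assoc, rule sum.swap)
  finally show ?thesis .
qed

lemma cstar_span: "Q \<in> cstar_gen d n (weyl d n ` T) \<Longrightarrow> \<exists>f. Q = sp f"
proof (induction rule: cstar_gen.induct)
  case (gen A)
  then obtain v where "v \<in> T" "A = weyl d n v" by auto
  then show ?case using sp_gen by blast
next
  case (add A B)
  then obtain f1 f2 where "A = sp f1" "B = sp f2" by blast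
  then have "op_add A B = sp (\<lambda>v. f1 v + f2 v)" by (simp add: sp_add)
  then show ?case by blast
next
  case (smult A c)
  then obtain f where "A = sp f" by blast
  then have "op_smult c A = sp (\<lambda>v. c * f v)" by (simp add: sp_smult)
  then show ?case by blast
next
  case (mult A B)
  then obtain f1 f2 where "A = sp f1" "B = sp f2" by blast
  then have "op_mult d n A B = sp (\<lambda>w. \<Sum>u\<in>T. f1 u * f2 (vadd d (vneg d u) w))" by (simp add: sp_mult)
  then show ?case by blast
next
  case (adj A)
  then obtain f where "A = sp f" by blast
  then have "op_adj A = sp (\<lambda>w. cnj (f (vneg d w)))" by (simp add: sp_adj)
  then show ?case by blast
qed

lemma P_mult_sp: "op_mult d n P (sp f) = op_smult (\<Sum>v\<in>T. f v) P"
proof -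
  have "op_mult d n P (sp f) = osum T (\<lambda>v. op_smult (f v) P)"
    unfolding sp_def op_mult_osum_right[OF finite_T] op_mult_smult_right
    by (rule osum_cong) (simp add: P_mult_g)
  also have "\<dots> = op_smult (\<Sum>v\<in>T. f v) P"
    by (intro ext) (simp add: osum_def op_smult_def sum_distrib_right)
  finally show ?thesis .
qed

lemma P_minimal: "minimal_projection d n (cstar_gen d n (weyl d n ` T)) P"
  unfolding minimal_projection_def
proof (intro conjI ballI impI)
  show "P \<in> cstar_gen d n (weyl d n ` T)" by (rule P_in)
  show "is_projection d n P" by (rule P_projection)
  show "P \<noteq> (\<lambda>x y. 0)" by (rule P_nz)
  fix Q assume Q: "Q \<in> cstar_gen d n (weyl d n ` T)" and h: "is_projection d n Q \<and> op_mult d n P Q = Q"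
  obtain f where f: "Q = sp f" using cstar_span[OF Q] by blast
  define c where "c = (\<Sum>v\<in>T. f v)"
  have Qc: "Q = op_smult c P" using h f P_mult_sp c_def by metis
  have "op_mult d n Q Q = Q" using h by (simp add: is_projection_def)
  then have e: "op_smult (c * c) P = op_smult c P"
    unfolding Qc op_mult_smult_left op_mult_smult_right P_idem op_smult_smult .
  obtain x y where xy: "P x y \<noteq> 0" using P_nz by (meson ext)
  have "c * c * P x y = c * P x y" using fun_cong[OF fun_cong[OF e, of x], of y] by (simp add: op_smult_def)
  then have "c * c = c" using xy by simp
  then have "c = 0 \<or> c = 1" by (metis mult_cancel_right1 mult_zero_left)
  then show "Q = (\<lambda>x y. 0) \<or> Q = P" unfolding Qc by (auto simp: op_smult_def)
qed

lemma trace_P: "op_trace d n P = of_nat (d ^ n) / of_nat (card T)"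
proof -
  have "\<And>v. v \<in> T \<Longrightarrow> op_trace d n (g v) = (if v = vzero n then of_nat (d ^ n) else 0)"
    by (case_tac "v = vzero n") (simp_all add: g_zero trace_idop, simp add: g_def op_trace_smult weyl_trace[OF p T_V])
  then have "op_trace d n (osum T g) = of_nat (d ^ n)"
    by (simp add: op_trace_osum sum.delta finite_T zero_T cong: sum.cong)
  then show ?thesis by (simp add: P_def op_trace_smult)
qed

end

theorem mainTheorem1:
  fixes d n :: nat and \<rho> :: qop
  assumes "prime d" and "n \<ge> 1" and "is_state d n \<rho>"
  defines "S \<equiv> {v \<in> Vn d n. cmod (charfun d n \<rho> v) = 1}"
  shows "vzero n \<in> S \<and> (\<forall>u\<in>S. \<forall>v\<in>S. vadd d u v \<in> S) \<and> (\<forall>u\<in>S. vneg d u \<in> S) \<and>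
    (\<exists>r::nat. r \<le> n \<and> card S = d ^ r \<and>
      (\<forall>u\<in>S. \<forall>v\<in>S. op_mult d n (weyl d n u) (weyl d n v) = op_mult d n (weyl d n v) (weyl d n u)) \<and>
      (\<exists>P. minimal_projection d n (cstar_gen d n (weyl d n ` S)) P \<and>
           mean_state d n \<rho> = op_smult (1 / of_nat d ^ (n - r)) P))"
proof -
  interpret qs d n \<rho> using assms(1,3) by unfold_locales
  have ST: "S = T" unfolding S_def T_def using charfun_eq by auto
  have cl: "vzero n \<in> T" "\<forall>u\<in>T. \<forall>v\<in>T. vadd d u v \<in> T" "\<forall>u\<in>T. vneg d u \<in> T"
    using zero_T add_T neg_T by auto
  have "card T dvd d ^ (2*n)" using card_subgroup_dvd[OF d0 _ cl] T_V by blast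
  then obtain r where r: "card T = d ^ r" using divides_primepow_nat[OF p] by blast
  have "1 \<le> Re (op_trace d n P)" by (rule proj_trace_ge1[OF P_projection P_nz])
  then have "1 \<le> real (d ^ n) / real (d ^ r)" unfolding trace_P r by simp
  then have "real (d ^ r) \<le> real (d ^ n)" using d0 by (simp add: field_simps)
  then have "d ^ r \<le> d ^ n" by linarith
  then have rn: "r \<le> n" using prime_gt_1_nat[OF p] power_le_imp_le_exp by blast
  have ms: "mean_state d n \<rho> = op_smult (1 / of_nat d ^ (n - r)) P"
  proof (intro ext)
    fix xs ys
    have dn: "(of_nat d :: complex) ^ n = of_nat d ^ (n - r) * of_nat d ^ r"
      using rn by (simp add: power_add[symmetric])
    have "mean_state d n \<rho> xs ys = 1 / of_nat d ^ n * (\<Sum>v\<in>T. cnj (lam v) * weyl d n v xs ys)"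
      unfolding mean_state_def S_def[symmetric] ST by (simp add: charfun_eq T_V)
    also have "\<dots> = op_smult (1 / of_nat d ^ (n - r)) P xs ys"
      unfolding P_def using d0 by (simp add: op_smult_def osum_def g_def r dn)
    finally show "mean_state d n \<rho> xs ys = op_smult (1 / of_nat d ^ (n - r)) P xs ys" .
  qed
  show ?thesis
    unfolding ST
    using cl rn r commute_T P_minimal ms by blast
qed

end
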